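(* Let $m>n$ be positive integers and let $G[V_1,V_2]$ be a balanced bipartite graph on $2(m+n-1)$ vertices (so $|V_1|=|V_2|=m+n-1$) with minimum degree $\delta(G)>\frac{3}{4}(m+n-1)$. Then for every red-blue coloring of the edges of $G$, either the red subgraph contains a connected $m$-matching or the blue subgraph contains a connected $n$-matching.
   Context: For a red-blue edge coloring of $G$, the red subgraph $G_R$ (resp. blue subgraph $G_B$) is the spanning subgraph of $G$ consisting of all red (resp. blue) edges. A connected $k$-matching in a graph $H$ is a matching with $k$ edges all of which lie in a single connected component of $H$. A red connected $k$-matching is a connected $k$-matching in $G_R$; similarly for blue. *)

theory Defs
  imports Main
begin

definition adj :: "'a set set \<Rightarrow> 'a \<Rightarrow> 'a \<Rightarrow> bool" where
  "adj F u v \<longleftrightarrow> {u, v} \<in> F"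

definition connected_in :: "'a set set \<Rightarrow> 'a \<Rightarrow> 'a \<Rightarrow> bool" where
  "connected_in F u v \<longleftrightarrow> (adj F)\<^sup>*\<^sup>* u v"

definition degree :: "'a set set \<Rightarrow> 'a \<Rightarrow> nat" where
  "degree F v = card {u. {u, v} \<in> F}"

definition matching :: "'a set set \<Rightarrow> 'a set set \<Rightarrow> bool" where
  "matching F M \<longleftrightarrow> M \<subseteq> F \<and> (\<forall>e\<in>M. \<forall>e'\<in>M. e \<noteq> e' \<longrightarrow> e \<inter> e' = {})"

definition connected_k_matching :: "'a set set \<Rightarrow> nat \<Rightarrow> 'a set set \<Rightarrow> bool" where
  "connected_k_matching F k M \<longleftrightarrow> matching F M \<and> finite M \<and> card M = k \<and>
     (\<exists>w. \<forall>e\<in>M. \<forall>x\<in>e. connected_in F w x)"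

definition has_connected_k_matching :: "'a set set \<Rightarrow> nat \<Rightarrow> bool" where
  "has_connected_k_matching F k \<longleftrightarrow> (\<exists>M. connected_k_matching F k M)"

definition bipartite_graph :: "'a set \<Rightarrow> 'a set \<Rightarrow> 'a set set \<Rightarrow> bool" where
  "bipartite_graph V1 V2 E \<longleftrightarrow> V1 \<inter> V2 = {} \<and>
     (\<forall>e\<in>E. \<exists>x\<in>V1. \<exists>y\<in>V2. e = {x, y})"

end

theory Submission
  imports Defs
begin

lemma hall:
  fixes P :: "'a set" and Nb :: "'a \<Rightarrow> 'b set"
  assumes "finite P" "\<forall>x\<in>P. finite (Nb x)" "\<forall>S\<subseteq>P. card S \<le> card (\<Union>(Nb ` S))"
  shows "\<exists>f. inj_on f P \<and> (\<forall>x\<in>P. f x \<in> Nb x)"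
  using assms
proof (induction "card P" arbitrary: P Nb rule: less_induct)
  case less
  note finP = less.prems(1) and finN = less.prems(2) and H = less.prems(3)
  show ?case
  proof (cases "P = {}")
    case True then show ?thesis by auto
  next
    case Pne: False
    show ?thesis
    proof (cases "\<exists>S. S \<noteq> {} \<and> S \<subset> P \<and> card (\<Union>(Nb ` S)) = card S")
      case True
      then obtain S where S: "S \<noteq> {}" "S \<subset> P" "card (\<Union>(Nb ` S)) = card S" by blast
      have finS: "finite S" using S(2) finP finite_subset by blast
      have cS: "card S < card P" using S(2) finP psubset_card_mono by blast
      have finNS: "\<forall>x\<in>S. finite (Nb x)" using finN S(2) by auto
      have HS: "\<forall>T\<subseteq>S. card T \<le> card (\<Union>(Nb ` T))" using H S(2) by auto
      have "\<exists>f. inj_on f S \<and> (\<forall>x\<in>S. f x \<in> Nb x)"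
        using less.hyps[OF cS finS finNS HS] .
      then obtain f1 where f1: "inj_on f1 S" "\<forall>x\<in>S. f1 x \<in> Nb x" by blast
      define NS where "NS = \<Union>(Nb ` S)"
      define Nb2 where "Nb2 = (\<lambda>x. Nb x - NS)"
      have "card S > 0" using S(1) finS by (simp add: card_gt_0_iff)
      moreover have "card (P - S) = card P - card S" using S(2) finS by (simp add: card_Diff_subset psubset_imp_subset)
      moreover have "card S \<le> card P" using cS by simp
      ultimately have cPS: "card (P - S) < card P" by linarith
      have finPS: "finite (P - S)" using finP by auto
      have hall2: "\<forall>T\<subseteq>P - S. card T \<le> card (\<Union>(Nb2 ` T))"
      proof (intro allI impI)
        fix T assume T: "T \<subseteq> P - S"
        have finT: "finite T" using T finPS finite_subset by blast
        have eq: "\<Union>(Nb2 ` T) = \<Union>(Nb ` (T \<union> S)) - NS" by (auto simp: Nb2_def NS_def)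
        have TSsub: "T \<union> S \<subseteq> P" using T S(2) by auto
        have finU: "finite (\<Union>(Nb ` (T \<union> S)))" using TSsub finN finT finS by auto
        have NSsub: "NS \<subseteq> \<Union>(Nb ` (T \<union> S))" by (auto simp: NS_def)
        have c1: "card (\<Union>(Nb ` (T \<union> S)) - NS) = card (\<Union>(Nb ` (T \<union> S))) - card NS"
          using card_Diff_subset[OF finite_subset[OF NSsub finU] NSsub] .
        have c2: "card (T \<union> S) \<le> card (\<Union>(Nb ` (T \<union> S)))" using H TSsub by blast
        have c3: "card (T \<union> S) = card T + card S"
          using T finT finS by (subst card_Un_disjoint) auto
        have c4: "card NS = card S" using S(3) by (simp add: NS_def)
        show "card T \<le> card (\<Union>(Nb2 ` T))" using eq c1 c2 c3 c4 by simp
      qed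
      have finN2: "\<forall>x\<in>P - S. finite (Nb2 x)" using finN by (auto simp: Nb2_def)
      have "\<exists>f. inj_on f (P - S) \<and> (\<forall>x\<in>P - S. f x \<in> Nb2 x)"
        using less.hyps[OF cPS finPS finN2 hall2] .
      then obtain f2 where f2: "inj_on f2 (P - S)" "\<forall>x\<in>P - S. f2 x \<in> Nb2 x" by blast
      define f where "f = (\<lambda>x. if x \<in> S then f1 x else f2 x)"
      have "inj_on f P"
      proof (rule inj_onI)
        fix x y assume x: "x \<in> P" and y: "y \<in> P" and fxy: "f x = f y"
        show "x = y"
        proof (cases "x \<in> S"; cases "y \<in> S")
          assume "x \<in> S" "y \<in> S" then show ?thesis using fxy f1(1) by (auto simp: f_def inj_on_def)
        next
          assume a: "x \<in> S" "y \<notin> S"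
          then have "f x \<in> NS" using f1(2) by (auto simp: f_def NS_def)
          moreover have "f y \<notin> NS" using a y f2(2) by (auto simp: f_def Nb2_def)
          ultimately show ?thesis using fxy by simp
        next
          assume a: "x \<notin> S" "y \<in> S"
          then have "f y \<in> NS" using f1(2) by (auto simp: f_def NS_def)
          moreover have "f x \<notin> NS" using a x f2(2) by (auto simp: f_def Nb2_def)
          ultimately show ?thesis using fxy by simp
        next
          assume "x \<notin> S" "y \<notin> S" then show ?thesis using fxy f2(1) x y by (auto simp: f_def inj_on_def)
        qed
      qed
      moreover have "\<forall>x\<in>P. f x \<in> Nb x" using f1(2) f2(2) by (auto simp: f_def Nb2_def)
      ultimately show ?thesis by blast
    next
      case False
      then have strict: "\<forall>S. S \<noteq> {} \<and> S \<subset> P \<longrightarrow> card S < card (\<Union>(Nb ` S))"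
        using H by (metis le_neq_implies_less psubset_imp_subset)
      obtain x where x: "x \<in> P" using Pne by blast
      have "card {x} \<le> card (\<Union>(Nb ` {x}))" using H x by blast
      then have "Nb x \<noteq> {}" by auto
      then obtain y where y: "y \<in> Nb x" by blast
      define Nb1 where "Nb1 = (\<lambda>z. Nb z - {y})"
      have "card P > 0" using x finP by (auto simp: card_gt_0_iff)
      then have cP1: "card (P - {x}) < card P" using x finP by simp
      have finP1: "finite (P - {x})" using finP by auto
      have finN1: "\<forall>z\<in>P - {x}. finite (Nb1 z)" using finN by (auto simp: Nb1_def)
      have hall1: "\<forall>T\<subseteq>P - {x}. card T \<le> card (\<Union>(Nb1 ` T))"
      proof (intro allI impI)
        fix T assume T: "T \<subseteq> P - {x}"
        show "card T \<le> card (\<Union>(Nb1 ` T))"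
        proof (cases "T = {}")
          case True then show ?thesis by simp
        next
          case False
          have "T \<subset> P" using T x by auto
          then have lt: "card T < card (\<Union>(Nb ` T))" using strict False by blast
          have finT: "finite T" using T finP finite_subset by blast
          have finU: "finite (\<Union>(Nb ` T))" using finT finN T by auto
          have eq: "\<Union>(Nb1 ` T) = \<Union>(Nb ` T) - {y}" by (auto simp: Nb1_def)
          have "card (\<Union>(Nb ` T)) - 1 \<le> card (\<Union>(Nb ` T) - {y})"
            using finU by (simp add: card_Diff_singleton_if)
          then show ?thesis using lt eq by simp
        qed
      qed
      have "\<exists>f. inj_on f (P - {x}) \<and> (\<forall>z\<in>P - {x}. f z \<in> Nb1 z)"
        using less.hyps[OF cP1 finP1 finN1 hall1] .
      then obtain f1 where f1: "inj_on f1 (P - {x})" "\<forall>z\<in>P - {x}. f1 z \<in> Nb1 z" by blast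
      define f where "f = f1(x := y)"
      have "inj_on f P"
      proof (rule inj_onI)
        fix a b assume a: "a \<in> P" and b: "b \<in> P" and fab: "f a = f b"
        show "a = b"
        proof (cases "a = x"; cases "b = x")
          assume "a = x" "b = x" then show ?thesis by simp
        next
          assume "a = x" "b \<noteq> x" then show ?thesis using fab f1(2) b by (auto simp: f_def Nb1_def)
        next
          assume "a \<noteq> x" "b = x" then show ?thesis using fab f1(2) a by (auto simp: f_def Nb1_def)
        next
          assume "a \<noteq> x" "b \<noteq> x" then show ?thesis using fab f1(1) a b by (auto simp: f_def inj_on_def)
        qed
      qed
      moreover have "\<forall>z\<in>P. f z \<in> Nb z" using f1(2) y by (auto simp: f_def Nb1_def)
      ultimately show ?thesis by blast
    qed
  qed
qed

lemma hall_defect: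
  fixes P :: "'a set" and Nb :: "'a \<Rightarrow> 'b set" and d :: nat
  assumes finP: "finite P" and finN: "\<forall>x\<in>P. finite (Nb x)"
    and H: "\<forall>S\<subseteq>P. card S \<le> card (\<Union>(Nb ` S)) + d"
  shows "\<exists>P' f. P' \<subseteq> P \<and> card P \<le> card P' + d \<and> inj_on f P' \<and> (\<forall>x\<in>P'. f x \<in> Nb x)"
proof -
  define Nb' :: "'a \<Rightarrow> ('b + nat) set" where "Nb' = (\<lambda>x. Inl ` Nb x \<union> Inr ` {..<d})"
  have H': "\<forall>S\<subseteq>P. card S \<le> card (\<Union>(Nb' ` S))"
  proof (intro allI impI)
    fix S assume S: "S \<subseteq> P"
    show "card S \<le> card (\<Union>(Nb' ` S))"
    proof (cases "S = {}")
      case True then show ?thesis by simp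
    next
      case False
      have eq: "\<Union>(Nb' ` S) = Inl ` \<Union>(Nb ` S) \<union> Inr ` {..<d}" using False by (auto simp: Nb'_def)
      have finS: "finite S" using S finP finite_subset by blast
      have finU: "finite (\<Union>(Nb ` S))" using finS S finN by auto
      have "card (Inl ` \<Union>(Nb ` S) \<union> Inr ` {..<d} :: ('b + nat) set) = card (Inl ` \<Union>(Nb ` S) :: ('b + nat) set) + card (Inr ` {..<d} :: ('b + nat) set)"
        using finU by (intro card_Un_disjoint) auto
      also have "\<dots> = card (\<Union>(Nb ` S)) + d" by (simp add: card_image)
      finally show ?thesis using eq H S by force
    qed
  qed
  have finN': "\<forall>x\<in>P. finite (Nb' x)" using finN by (auto simp: Nb'_def)
  obtain g where g: "inj_on g P" "\<forall>x\<in>P. g x \<in> Nb' x" using hall[OF finP finN' H'] by blast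
  define P' where "P' = {x\<in>P. isl (g x)}"
  define f where "f = (\<lambda>x. projl (g x))"
  have P'P: "P' \<subseteq> P" by (auto simp: P'_def)
  have img: "g ` (P - P') \<subseteq> Inr ` {..<d}"
  proof
    fix z assume "z \<in> g ` (P - P')"
    then obtain x where x: "x \<in> P" "\<not> isl (g x)" "z = g x" by (auto simp: P'_def)
    then have "g x \<in> Inl ` Nb x \<union> Inr ` {..<d}" using g(2) by (auto simp: Nb'_def)
    then show "z \<in> Inr ` {..<d}" using x by auto
  qed
  have "card (P - P') = card (g ` (P - P'))"
    using g(1) by (metis Diff_subset card_image inj_on_subset)
  also have "\<dots> \<le> card (Inr ` {..<d} :: ('b + nat) set)" by (rule card_mono[OF _ img]) simp
  also have "\<dots> = d" by (simp add: card_image)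
  finally have cd: "card (P - P') \<le> d" .
  have "card P = card P' + card (P - P')"
    using finP P'P by (metis card_Diff_subset card_mono finite_subset le_add_diff_inverse)
  then have c1: "card P \<le> card P' + d" using cd by simp
  have inj: "inj_on f P'"
  proof (rule inj_onI)
    fix x y assume x: "x \<in> P'" and y: "y \<in> P'" and e: "f x = f y"
    have "g x = Inl (f x)" using x by (auto simp: P'_def f_def)
    moreover have "g y = Inl (f y)" using y by (auto simp: P'_def f_def)
    ultimately have "g x = g y" using e by simp
    then show "x = y" using g(1) x y P'P by (auto simp: inj_on_def)
  qed
  have mem: "\<forall>x\<in>P'. f x \<in> Nb x"
  proof
    fix x assume x: "x \<in> P'"
    have "g x = Inl (f x)" using x by (auto simp: P'_def f_def)
    moreover have "g x \<in> Nb' x" using g(2) x P'P by auto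
    ultimately show "f x \<in> Nb x" by (auto simp: Nb'_def)
  qed
  show ?thesis using P'P c1 inj mem by blast
qed

lemma koenig:
  fixes P :: "'a set" and Q :: "'b set" and r :: "'a \<Rightarrow> 'b \<Rightarrow> bool" and k :: nat
  assumes finP: "finite P" and finQ: "finite Q"
  shows "(\<exists>P' f. P' \<subseteq> P \<and> card P' = k \<and> inj_on f P' \<and> (\<forall>x\<in>P'. f x \<in> Q \<and> r x (f x))) \<or>
         (\<exists>SP SQ. SP \<subseteq> P \<and> SQ \<subseteq> Q \<and> card SP + card SQ < k \<and> (\<forall>x\<in>P. \<forall>y\<in>Q. r x y \<longrightarrow> x \<in> SP \<or> y \<in> SQ))"
proof (cases "card P < k")
  case True
  then show ?thesis by (intro disjI2 exI[of _ P] exI[of _ "{}"]) auto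
next
  case False
  define d where "d = card P - k"
  define Nb where "Nb = (\<lambda>x. {y\<in>Q. r x y})"
  have finN: "\<forall>x\<in>P. finite (Nb x)" using finQ by (auto simp: Nb_def)
  show ?thesis
  proof (cases "\<forall>S\<subseteq>P. card S \<le> card (\<Union>(Nb ` S)) + d")
    case True
    obtain P' f where P': "P' \<subseteq> P" "card P \<le> card P' + d" "inj_on f P'" "\<forall>x\<in>P'. f x \<in> Nb x"
      using hall_defect[OF finP finN True] by blast
    have "k \<le> card P'" using P'(2) False by (simp add: d_def)
    then obtain P'' where P'': "P'' \<subseteq> P'" "card P'' = k" "finite P''" by (meson obtain_subset_with_card_n)
    have "inj_on f P''" using P'(3) P''(1) inj_on_subset by blast
    moreover have "\<forall>x\<in>P''. f x \<in> Q \<and> r x (f x)" using P'(4) P''(1) by (auto simp: Nb_def)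
    ultimately show ?thesis using P'(1) P''(1,2) by (intro disjI1 exI[of _ P''] exI[of _ f]) auto
  next
    case False2: False
    then obtain S where S: "S \<subseteq> P" "card (\<Union>(Nb ` S)) + d < card S" by (auto simp: not_le)
    have finS: "finite S" using S(1) finP finite_subset by blast
    have cS: "card S \<le> card P" using S(1) finP card_mono by blast
    have cSP: "card (P - S) = card P - card S" using S(1) finS by (simp add: card_Diff_subset)
    have sub: "\<Union>(Nb ` S) \<subseteq> Q" by (auto simp: Nb_def)
    have lt: "card (P - S) + card (\<Union>(Nb ` S)) < k" using cSP S(2) cS False by (simp add: d_def)
    have cov: "\<forall>x\<in>P. \<forall>y\<in>Q. r x y \<longrightarrow> x \<in> P - S \<or> y \<in> \<Union>(Nb ` S)" by (auto simp: Nb_def)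
    show ?thesis using lt cov sub by (intro disjI2 exI[of _ "P - S"] exI[of _ "\<Union>(Nb ` S)"]) auto
  qed
qed

definition mcomp :: "'a set set \<Rightarrow> 'a \<Rightarrow> 'a set" where
  "mcomp F v = {u. connected_in F v u}"

lemma adj_sym: "adj F u v \<longleftrightarrow> adj F v u" by (simp add: adj_def insert_commute)

lemma conn_refl: "connected_in F v v" by (simp add: connected_in_def)

lemma conn_sym:
  assumes "connected_in F u v" shows "connected_in F v u"
proof -
  have "(adj F)\<^sup>*\<^sup>* u v" using assms by (simp add: connected_in_def)
  then have "(adj F)\<^sup>*\<^sup>* v u"
  proof (induction rule: rtranclp_induct)
    case base show ?case by simp
  next
    case (step y z)
    have "adj F z y" using step(2) adj_sym by metis
    then show ?case using step(3) by (rule converse_rtranclp_into_rtranclp)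
  qed
  then show ?thesis by (simp add: connected_in_def)
qed

lemma conn_trans: "connected_in F u v \<Longrightarrow> connected_in F v w \<Longrightarrow> connected_in F u w"
  by (simp add: connected_in_def)

lemma conn_edge: "{u, v} \<in> F \<Longrightarrow> connected_in F u v"
  by (simp add: connected_in_def adj_def r_into_rtranclp)

lemma comp_self: "v \<in> mcomp F v" by (simp add: mcomp_def conn_refl)

lemma comp_eq: "u \<in> mcomp F v \<Longrightarrow> mcomp F u = mcomp F v"
  unfolding mcomp_def by (auto intro: conn_trans conn_sym)

lemma comp_edge: "{u, v} \<in> F \<Longrightarrow> u \<in> mcomp F w \<Longrightarrow> v \<in> mcomp F w"
  unfolding mcomp_def by (auto intro: conn_trans conn_edge)

lemma comp_edge': "{u, v} \<in> F \<Longrightarrow> v \<in> mcomp F w \<Longrightarrow> u \<in> mcomp F w"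
proof -
  assume a: "{u, v} \<in> F" "v \<in> mcomp F w"
  have "{v, u} \<in> F" using a(1) by (simp add: insert_commute)
  then show ?thesis using a(2) by (rule comp_edge)
qed

lemma comp_edge_eq: "{u, v} \<in> F \<Longrightarrow> mcomp F u = mcomp F v"
proof -
  assume a: "{u, v} \<in> F"
  have "v \<in> mcomp F u" using comp_edge[OF a comp_self] .
  then have "mcomp F v = mcomp F u" by (rule comp_eq)
  then show ?thesis by simp
qed

lemma comp_eqI: "z \<in> mcomp F u \<Longrightarrow> z \<in> mcomp F v \<Longrightarrow> mcomp F u = mcomp F v"
proof -
  assume a: "z \<in> mcomp F u" "z \<in> mcomp F v"
  have "mcomp F z = mcomp F u" using a(1) by (rule comp_eq)
  moreover have "mcomp F z = mcomp F v" using a(2) by (rule comp_eq)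
  ultimately show ?thesis by simp
qed

lemma comp_disj: "mcomp F u \<noteq> mcomp F v \<Longrightarrow> mcomp F u \<inter> mcomp F v = {}"
proof (rule ccontr)
  assume a: "mcomp F u \<noteq> mcomp F v" "mcomp F u \<inter> mcomp F v \<noteq> {}"
  then obtain z where "z \<in> mcomp F u" "z \<in> mcomp F v" by blast
  then have "mcomp F u = mcomp F v" by (rule comp_eqI)
  then show False using a(1) by simp
qed

lemma comp_conn: "x \<in> mcomp F w \<Longrightarrow> connected_in F w x" by (simp add: mcomp_def)

lemma zero_match: "has_connected_k_matching F 0"
proof -
  have "connected_k_matching F 0 {}"
    unfolding connected_k_matching_def matching_def by simp
  then show ?thesis unfolding has_connected_k_matching_def by blast
qed

lemma pairs_conn_match:
  assumes finP: "finite P" and PX: "P \<subseteq> X" and fY: "f ` P \<subseteq> Y" and XY: "X \<inter> Y = {}"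
    and inj: "inj_on f P" and inF: "\<forall>x\<in>P. {x, f x} \<in> F"
    and cn: "\<forall>x\<in>P. connected_in F w x \<and> connected_in F w (f x)" and cP: "card P = k"
  shows "has_connected_k_matching F k"
proof -
  define M where "M = (\<lambda>x. {x, f x}) ` P"
  have ne: "\<forall>x\<in>P. \<forall>x'\<in>P. x \<noteq> f x'" using PX fY XY by blast
  have mt: "matching F M"
    unfolding matching_def
  proof (intro conjI ballI impI)
    show "M \<subseteq> F" using inF by (auto simp: M_def)
  next
    fix e e' assume e: "e \<in> M" and e': "e' \<in> M" and d: "e \<noteq> e'"
    obtain x where x: "x \<in> P" "e = {x, f x}" using e by (auto simp: M_def)
    obtain x' where x': "x' \<in> P" "e' = {x', f x'}" using e' by (auto simp: M_def)
    have "x \<noteq> x'" using d x x' by auto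
    moreover have "f x \<noteq> f x'" using calculation inj x(1) x'(1) by (auto simp: inj_on_def)
    ultimately show "e \<inter> e' = {}" using x x' ne by auto
  qed
  have injM: "inj_on (\<lambda>x. {x, f x}) P"
  proof (rule inj_onI)
    fix x x' assume x: "x \<in> P" and x': "x' \<in> P" and eq: "{x, f x} = {x', f x'}"
    then have "x \<in> {x', f x'}" by auto
    then show "x = x'" using ne x x' by auto
  qed
  have cM: "card M = k" using card_image[OF injM] cP by (simp add: M_def)
  have "\<forall>e\<in>M. \<forall>v\<in>e. connected_in F w v" using cn by (auto simp: M_def)
  then show ?thesis using mt cM finP
    unfolding has_connected_k_matching_def connected_k_matching_def M_def by blast
qed

lemma conn_match_subset:
  assumes "k \<le> j" and "connected_k_matching F j M"
  shows "has_connected_k_matching F k"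
proof -
  have fin: "finite M" and cM: "card M = j" using assms(2) by (auto simp: connected_k_matching_def)
  obtain M' where M': "M' \<subseteq> M" "card M' = k" "finite M'"
    using obtain_subset_with_card_n[of k M] assms(1) cM by auto
  have mM: "matching F M" using assms(2) by (simp add: connected_k_matching_def)
  then have "matching F M'" using M'(1) unfolding matching_def by blast
  moreover obtain w where "\<forall>e\<in>M. \<forall>x\<in>e. connected_in F w x" using assms(2) by (auto simp: connected_k_matching_def)
  ultimately show ?thesis using M' unfolding has_connected_k_matching_def connected_k_matching_def by blast
qed

locale bip =
  fixes X Y :: "'a set" and E :: "'a set set" and N \<tau> :: nat
  assumes finX: "finite X" and finY: "finite Y"
    and cX: "card X = N" and cY: "card Y = N"
    and disj: "X \<inter> Y = {}"
    and edges: "\<forall>e\<in>E. \<exists>x\<in>X. \<exists>y\<in>Y. e = {x, y}"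
    and nnX: "\<forall>x\<in>X. card {y\<in>Y. {x, y} \<notin> E} \<le> \<tau>"
    and nnY: "\<forall>y\<in>Y. card {x\<in>X. {x, y} \<notin> E} \<le> \<tau>"
    and tau: "4 * \<tau> < N"

lemma bip_swap:
  assumes "bip X Y E N \<tau>" shows "bip Y X E N \<tau>"
proof -
  interpret bip X Y E N \<tau> by fact
  have e: "\<forall>e\<in>E. \<exists>x\<in>Y. \<exists>y\<in>X. e = {x, y}"
  proof
    fix e assume "e \<in> E"
    then obtain x y where "x \<in> X" "y \<in> Y" "e = {x, y}" using edges by blast
    then show "\<exists>x\<in>Y. \<exists>y\<in>X. e = {x, y}" by (auto simp: insert_commute)
  qed
  have c1: "\<forall>x\<in>Y. card {y\<in>X. {x, y} \<notin> E} \<le> \<tau>"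
  proof
    fix x assume "x \<in> Y"
    have "{y\<in>X. {x, y} \<notin> E} = {y\<in>X. {y, x} \<notin> E}" by (auto simp: insert_commute)
    then show "card {y\<in>X. {x, y} \<notin> E} \<le> \<tau>" using nnY \<open>x \<in> Y\<close> by simp
  qed
  have c2: "\<forall>y\<in>X. card {x\<in>Y. {x, y} \<notin> E} \<le> \<tau>"
  proof
    fix y assume "y \<in> X"
    have "{x\<in>Y. {x, y} \<notin> E} = {x\<in>Y. {y, x} \<notin> E}" by (auto simp: insert_commute)
    then show "card {x\<in>Y. {x, y} \<notin> E} \<le> \<tau>" using nnX \<open>y \<in> X\<close> by simp
  qed
  have d: "Y \<inter> X = {}" using disj by blast
  show ?thesis using finY finX cY cX d e c1 c2 tau unfolding bip_def by (intro conjI) assumption+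
qed

context bip
begin

lemma nn_sub_X:
  assumes "x \<in> X" "S \<subseteq> Y" "\<forall>y\<in>S. {x, y} \<notin> E" shows "card S \<le> \<tau>"
proof -
  have "S \<subseteq> {y\<in>Y. {x, y} \<notin> E}" using assms by auto
  then have "card S \<le> card {y\<in>Y. {x, y} \<notin> E}" using finY by (intro card_mono) auto
  then show ?thesis using nnX assms(1) by force
qed

lemma nn_sub_Y:
  assumes "y \<in> Y" "S \<subseteq> X" "\<forall>x\<in>S. {x, y} \<notin> E" shows "card S \<le> \<tau>"
proof -
  have "S \<subseteq> {x\<in>X. {x, y} \<notin> E}" using assms by auto
  then have "card S \<le> card {x\<in>X. {x, y} \<notin> E}" using finX by (intro card_mono) auto
  then show ?thesis using nnY assms(1) by force
qed

lemma edge_XY: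
  assumes "e \<in> E" obtains x y where "x \<in> X" "y \<in> Y" "e = {x, y}"
  using edges assms by blast

lemma dense_match:
  assumes PX: "P \<subseteq> X" and QY: "Q \<subseteq> Y" and k1: "k \<le> card P" and k2: "k \<le> card Q"
    and k3: "k + 2 * \<tau> \<le> card P + card Q"
  shows "\<exists>P' f. P' \<subseteq> P \<and> card P' = k \<and> inj_on f P' \<and> (\<forall>x\<in>P'. f x \<in> Q \<and> {x, f x} \<in> E)"
proof -
  have finP: "finite P" using PX finX finite_subset by blast
  have finQ: "finite Q" using QY finY finite_subset by blast
  from koenig[OF finP finQ, of k "\<lambda>x y. {x, y} \<in> E"]
  show ?thesis
  proof
    assume "\<exists>SP SQ. SP \<subseteq> P \<and> SQ \<subseteq> Q \<and> card SP + card SQ < k \<and>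
      (\<forall>x\<in>P. \<forall>y\<in>Q. {x, y} \<in> E \<longrightarrow> x \<in> SP \<or> y \<in> SQ)"
    then obtain SP SQ where S: "SP \<subseteq> P" "SQ \<subseteq> Q" "card SP + card SQ < k"
      "\<forall>x\<in>P. \<forall>y\<in>Q. {x, y} \<in> E \<longrightarrow> x \<in> SP \<or> y \<in> SQ" by blast
    have cSP: "card (P - SP) = card P - card SP" using S(1) finP by (meson card_Diff_subset finite_subset)
    have cSQ: "card (Q - SQ) = card Q - card SQ" using S(2) finQ by (meson card_Diff_subset finite_subset)
    have "card SP \<le> card P" using S(1) finP card_mono by blast
    have "card SQ \<le> card Q" using S(2) finQ card_mono by blast
    show ?thesis
    proof (cases "P - SP = {}")
      case True
      then have "P \<subseteq> SP" by blast
      then have "card P \<le> card SP" using S(1) finP by (meson card_mono finite_subset)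
      then show ?thesis using S(3) k1 by linarith
    next
      case False
      then obtain x0 where x0: "x0 \<in> P" "x0 \<notin> SP" by blast
      show ?thesis
      proof (cases "Q - SQ = {}")
        case True
        then have "Q \<subseteq> SQ" by blast
        then have "card Q \<le> card SQ" using S(2) finQ by (meson card_mono finite_subset)
        then show ?thesis using S(3) k2 by linarith
      next
        case False
        then obtain y0 where y0: "y0 \<in> Q" "y0 \<notin> SQ" by blast
        have "card (Q - SQ) \<le> \<tau>"
          using nn_sub_X[of x0 "Q - SQ"] x0 PX QY S(4) by blast
        moreover have "card (P - SP) \<le> \<tau>"
          using nn_sub_Y[of y0 "P - SP"] y0 PX QY S(4) by blast
        ultimately show ?thesis using cSP cSQ S(3) k3 \<open>card SP \<le> card P\<close> \<open>card SQ \<le> card Q\<close> by linarith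
      qed
    qed
  qed auto
qed

lemma common_nbr_X:
  assumes "x \<in> X" "x' \<in> X" "Q \<subseteq> Y" "2 * \<tau> < card Q"
  shows "\<exists>y\<in>Q. {x, y} \<in> E \<and> {x', y} \<in> E"
proof (rule ccontr)
  assume "\<not> ?thesis"
  then have "Q \<subseteq> {y\<in>Q. {x, y} \<notin> E} \<union> {y\<in>Q. {x', y} \<notin> E}" by auto
  moreover have "card {y\<in>Q. {x, y} \<notin> E} \<le> \<tau>" by (rule nn_sub_X[of x]) (use assms in auto)
  moreover have "card {y\<in>Q. {x', y} \<notin> E} \<le> \<tau>" by (rule nn_sub_X[of x']) (use assms in auto)
  moreover have "finite Q" using assms(3) finY finite_subset by blast
  ultimately have "card Q \<le> 2 * \<tau>"
  proof -
    assume a: "Q \<subseteq> {y\<in>Q. {x, y} \<notin> E} \<union> {y\<in>Q. {x', y} \<notin> E}"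
      "card {y\<in>Q. {x, y} \<notin> E} \<le> \<tau>" "card {y\<in>Q. {x', y} \<notin> E} \<le> \<tau>" "finite Q"
    have "card Q \<le> card ({y\<in>Q. {x, y} \<notin> E} \<union> {y\<in>Q. {x', y} \<notin> E})"
      using a(1,4) by (intro card_mono) auto
    also have "\<dots> \<le> card {y\<in>Q. {x, y} \<notin> E} + card {y\<in>Q. {x', y} \<notin> E}" by (rule card_Un_le)
    finally show ?thesis using a(2,3) by linarith
  qed
  then show False using assms(4) by simp
qed

lemma common_nbr_Y:
  assumes "y \<in> Y" "y' \<in> Y" "P \<subseteq> X" "2 * \<tau> < card P"
  shows "\<exists>x\<in>P. {x, y} \<in> E \<and> {x, y'} \<in> E"
proof (rule ccontr)
  assume "\<not> ?thesis"
  then have "P \<subseteq> {x\<in>P. {x, y} \<notin> E} \<union> {x\<in>P. {x, y'} \<notin> E}" by auto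
  moreover have "card {x\<in>P. {x, y} \<notin> E} \<le> \<tau>" by (rule nn_sub_Y[of y]) (use assms in auto)
  moreover have "card {x\<in>P. {x, y'} \<notin> E} \<le> \<tau>" by (rule nn_sub_Y[of y']) (use assms in auto)
  moreover have "finite P" using assms(3) finX finite_subset by blast
  ultimately have "card P \<le> 2 * \<tau>"
  proof -
    assume a: "P \<subseteq> {x\<in>P. {x, y} \<notin> E} \<union> {x\<in>P. {x, y'} \<notin> E}"
      "card {x\<in>P. {x, y} \<notin> E} \<le> \<tau>" "card {x\<in>P. {x, y'} \<notin> E} \<le> \<tau>" "finite P"
    have "card P \<le> card ({x\<in>P. {x, y} \<notin> E} \<union> {x\<in>P. {x, y'} \<notin> E})"
      using a(1,4) by (intro card_mono) auto
    also have "\<dots> \<le> card {x\<in>P. {x, y} \<notin> E} + card {x\<in>P. {x, y'} \<notin> E}" by (rule card_Un_le)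
    finally show ?thesis using a(2,3) by linarith
  qed
  then show False using assms(4) by simp
qed

lemma T1conn:
  assumes PX: "P \<subseteq> X" and QY: "Q \<subseteq> Y" and FE: "F \<subseteq> E"
    and col: "\<And>x y. x \<in> P \<Longrightarrow> y \<in> Q \<Longrightarrow> {x, y} \<in> E \<Longrightarrow> {x, y} \<in> F"
    and k1: "k \<le> card P" and k2: "k \<le> card Q" and k3: "k + 2 * \<tau> \<le> card P + card Q"
    and cn: "2 * \<tau> < card P \<or> 2 * \<tau> < card Q \<or> (\<exists>w. \<forall>x\<in>P. connected_in F w x) \<or> (\<exists>w. \<forall>y\<in>Q. connected_in F w y)"
  shows "has_connected_k_matching F k"
proof -
  obtain P' f where M1: "P' \<subseteq> P" and M2: "card P' = k" and M3: "inj_on f P'"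
    and M4: "\<And>x. x \<in> P' \<Longrightarrow> f x \<in> Q \<and> {x, f x} \<in> E"
    using dense_match[OF PX QY k1 k2 k3] by blast
  have inF: "\<forall>x\<in>P'. {x, f x} \<in> F"
  proof
    fix x assume x: "x \<in> P'"
    have "x \<in> P" using x M1 by (rule subsetD[rotated])
    moreover have "f x \<in> Q" "{x, f x} \<in> E" using M4[OF x] by auto
    ultimately show "{x, f x} \<in> F" using col by blast
  qed
  have finP': "finite P'" using finite_subset[OF M1 finite_subset[OF PX finX]] .
  have P'X: "P' \<subseteq> X" using M1 PX by (rule subset_trans)
  have fY: "f ` P' \<subseteq> Y"
  proof
    fix z assume "z \<in> f ` P'"
    then obtain x where x: "x \<in> P'" "z = f x" by blast
    then have "z \<in> Q" using M4[OF x(1)] by simp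
    then show "z \<in> Y" using QY by blast
  qed
  show ?thesis
  proof (cases "k = 0")
    case True then show ?thesis by (simp add: zero_match)
  next
    case k0: False
    have Pne: "P \<noteq> {}" using k0 k1 by (intro notI) simp
    have Qne: "Q \<noteq> {}" using k0 k2 by (intro notI) simp
    have cases2: "(\<exists>w. \<forall>x\<in>P. connected_in F w x) \<or> (\<exists>w. \<forall>y\<in>Q. connected_in F w y)"
    proof -
      have A: "\<exists>w. \<forall>x\<in>P. connected_in F w x" if c: "2 * \<tau> < card Q"
      proof -
        obtain x0 where x0: "x0 \<in> P" using Pne by blast
        have "\<forall>x\<in>P. connected_in F x0 x"
        proof
          fix x assume x: "x \<in> P"
          obtain y where y: "y \<in> Q" "{x0, y} \<in> E" "{x, y} \<in> E"
            using common_nbr_X[of x0 x Q] x0 x PX QY c by blast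
          have e1: "{x0, y} \<in> F" using col[OF x0 y(1) y(2)] .
          have e2: "{x, y} \<in> F" using col[OF x y(1) y(3)] .
          have c1: "connected_in F x0 y" using e1 by (rule conn_edge)
          have c2: "connected_in F y x" using conn_sym[OF conn_edge[OF e2]] .
          show "connected_in F x0 x" using conn_trans[OF c1 c2] .
        qed
        then show ?thesis by blast
      qed
      have B: "\<exists>w. \<forall>y\<in>Q. connected_in F w y" if c: "2 * \<tau> < card P"
      proof -
        obtain y0 where y0: "y0 \<in> Q" using Qne by blast
        have "\<forall>y\<in>Q. connected_in F y0 y"
        proof
          fix y assume y: "y \<in> Q"
          obtain x where x: "x \<in> P" "{x, y0} \<in> E" "{x, y} \<in> E"
            using common_nbr_Y[of y0 y P] y0 y PX QY c by blast
          have e1: "{x, y0} \<in> F" using col[OF x(1) y0 x(2)] .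
          have e2: "{x, y} \<in> F" using col[OF x(1) y x(3)] .
          have c1: "connected_in F y0 x" using conn_sym[OF conn_edge[OF e1]] .
          have c2: "connected_in F x y" using e2 by (rule conn_edge)
          show "connected_in F y0 y" using conn_trans[OF c1 c2] .
        qed
        then show ?thesis by blast
      qed
      show ?thesis using cn A B by argo
    qed
    show ?thesis
    proof (cases "\<exists>w. \<forall>x\<in>P. connected_in F w x")
      case True
      then obtain w where w: "\<forall>x\<in>P. connected_in F w x" by blast
      have "\<forall>x\<in>P'. connected_in F w x \<and> connected_in F w (f x)"
      proof
        fix x assume x: "x \<in> P'"
        have e: "{x, f x} \<in> F" using inF x by blast
        have "x \<in> P" using x M1 by (rule subsetD[rotated])
        then have "connected_in F w x" using w by blast
        then show "connected_in F w x \<and> connected_in F w (f x)" using conn_trans[OF _ conn_edge[OF e]] by blast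
      qed
      then show ?thesis using pairs_conn_match[OF finP' P'X fY disj M3 inF _ M2] by blast
    next
      case False
      then obtain w where w: "\<forall>y\<in>Q. connected_in F w y" using cases2 by blast
      have "\<forall>x\<in>P'. connected_in F w x \<and> connected_in F w (f x)"
      proof
        fix x assume x: "x \<in> P'"
        have e: "{x, f x} \<in> F" using inF x by blast
        have "f x \<in> Q" using M4[OF x] by blast
        then have c1: "connected_in F w (f x)" using w by blast
        have c2: "connected_in F (f x) x" using conn_sym[OF conn_edge[OF e]] .
        show "connected_in F w x \<and> connected_in F w (f x)" using conn_trans[OF c1 c2] c1 by blast
      qed
      then show ?thesis using pairs_conn_match[OF finP' P'X fY disj M3 inF _ M2] by blast
    qed
  qed
qed

end

definition T1ok :: "nat \<Rightarrow> nat \<Rightarrow> nat \<Rightarrow> nat \<Rightarrow> bool" where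
  "T1ok \<tau> p q r \<longleftrightarrow> r \<le> p \<and> r \<le> q \<and> r + 2 * \<tau> \<le> p + q"

definition modelc :: "nat \<Rightarrow> nat \<Rightarrow> nat \<Rightarrow> nat \<Rightarrow> nat \<Rightarrow> nat \<Rightarrow> nat \<Rightarrow> nat \<Rightarrow> nat \<Rightarrow> nat \<Rightarrow> bool" where
  "modelc N \<tau> k k' a1 b1 jx jy kx ky \<longleftrightarrow>
   a1 < N \<and> b1 < N \<and>
   \<not> T1ok \<tau> a1 (N - b1) k' \<and> \<not> T1ok \<tau> (N - a1) b1 k' \<and>
   ((2 * \<tau> < N - a1 \<or> 2 * \<tau> < N - b1) \<longrightarrow> \<not> T1ok \<tau> (N - a1) (N - b1) k) \<and>
   kx + ky < k \<and> kx \<le> a1 \<and> ky \<le> b1 \<and> jx \<le> a1 \<and> jy \<le> b1 \<and>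
   (a1 - jx \<le> kx \<or> b1 - jy \<le> ky \<or> (a1 - jx \<le> kx + \<tau> \<and> b1 - jy \<le> ky + \<tau>)) \<and>
   ((2 * \<tau> < N - kx \<or> 2 * \<tau> < b1 - ky) \<longrightarrow> \<not> T1ok \<tau> (N - kx) (b1 - ky) k') \<and>
   ((2 * \<tau> < a1 - kx \<or> 2 * \<tau> < N - ky) \<longrightarrow> \<not> T1ok \<tau> (a1 - kx) (N - ky) k') \<and>
   jx \<le> \<tau> \<and> jy \<le> \<tau> \<and> (0 < jx \<longrightarrow> N - b1 \<le> \<tau>) \<and> (0 < jy \<longrightarrow> N - a1 \<le> \<tau>)"

lemma arithR:
  assumes mc: "modelc N \<tau> m n a1 b1 jx jy kx ky" and mn: "n < m" "0 < n" "N = m + n - 1"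
    and t: "4 * \<tau> < N"
  shows False
proof -
  define a2 where "a2 = N - a1"
  define b2 where "b2 = N - b1"
  define A where "A = a1 - jx"
  define B where "B = b1 - jy"
  have c1: "a1 < N" and c2: "b1 < N" and c3: "\<not> T1ok \<tau> a1 (N - b1) n" and c4: "\<not> T1ok \<tau> (N - a1) b1 n"
    and c5: "(2 * \<tau> < N - a1 \<or> 2 * \<tau> < N - b1) \<longrightarrow> \<not> T1ok \<tau> (N - a1) (N - b1) m"
    and c6: "kx + ky < m" and c7: "kx \<le> a1" and c8: "ky \<le> b1" and c9: "jx \<le> a1" and c10: "jy \<le> b1"
    and c11: "a1 - jx \<le> kx \<or> b1 - jy \<le> ky \<or> (a1 - jx \<le> kx + \<tau> \<and> b1 - jy \<le> ky + \<tau>)"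
    and c12: "(2 * \<tau> < N - kx \<or> 2 * \<tau> < b1 - ky) \<longrightarrow> \<not> T1ok \<tau> (N - kx) (b1 - ky) n"
    and c13: "(2 * \<tau> < a1 - kx \<or> 2 * \<tau> < N - ky) \<longrightarrow> \<not> T1ok \<tau> (a1 - kx) (N - ky) n"
    and c14: "jx \<le> \<tau>" and c15: "jy \<le> \<tau>" and c16: "0 < jx \<longrightarrow> N - b1 \<le> \<tau>" and c17: "0 < jy \<longrightarrow> N - a1 \<le> \<tau>"
    using mc unfolding modelc_def by blast+
  have a12: "a1 + a2 = N" and b12: "b1 + b2 = N" using c1 c2 by (simp_all add: a2_def b2_def)
  have q1: "a1 < n \<or> b2 < n \<or> a1 + b2 < n + 2 * \<tau>"
    using c3 unfolding T1ok_def b2_def by linarith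
  have q2: "a2 < n \<or> b1 < n \<or> a2 + b1 < n + 2 * \<tau>"
    using c4 unfolding T1ok_def a2_def by linarith
  have q3: "(2 * \<tau> < a2 \<or> 2 * \<tau> < b2) \<longrightarrow> (a2 < m \<or> b2 < m \<or> a2 + b2 < m + 2 * \<tau>)"
    using c5 unfolding T1ok_def a2_def b2_def by linarith
  have cov: "kx + ky < m" "kx \<le> a1" "ky \<le> b1" "jx \<le> a1" "jy \<le> b1"
    using c6 c7 c8 c9 c10 by auto
  have K: "A \<le> kx \<or> B \<le> ky \<or> (A \<le> kx + \<tau> \<and> B \<le> ky + \<tau>)"
    using c11 unfolding A_def B_def .
  have R1: "(2 * \<tau> < N - kx \<or> 2 * \<tau> < b1 - ky) \<longrightarrow> (N - kx < n \<or> b1 - ky < n \<or> (N - kx) + (b1 - ky) < n + 2 * \<tau>)"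
    using c12 unfolding T1ok_def by linarith
  have R2: "(2 * \<tau> < a1 - kx \<or> 2 * \<tau> < N - ky) \<longrightarrow> (a1 - kx < n \<or> N - ky < n \<or> (a1 - kx) + (N - ky) < n + 2 * \<tau>)"
    using c13 unfolding T1ok_def by linarith
  have J: "jx \<le> \<tau>" "jy \<le> \<tau>" "0 < jx \<longrightarrow> b2 \<le> \<tau>" "0 < jy \<longrightarrow> a2 \<le> \<tau>"
    using c14 c15 c16 c17 unfolding a2_def b2_def by auto
  have h: "2 * n \<le> N" "2 * \<tau> < m" "n + 2 * \<tau> < N" using mn t by linarith+
  have q3': "a2 < m \<or> b2 < m"
  proof (rule ccontr)
    assume "\<not> (a2 < m \<or> b2 < m)"
    then have "m \<le> a2" "m \<le> b2" by auto
    then show False using q3 h mn by linarith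
  qed
  have S1a: "m \<le> a1" using q1 q2 q3' a12 b12 h mn by (elim disjE) linarith+
  have S1b: "m \<le> b1" using q1 q2 q3' a12 b12 h mn by (elim disjE) linarith+
  have S2a: "b1 - ky < n"
  proof (rule ccontr)
    assume c: "\<not> b1 - ky < n"
    have "N - kx + (b1 - ky) \<ge> N + 1" using c cov S1b h mn by linarith
    then have pre: "2 * \<tau> < N - kx \<or> 2 * \<tau> < b1 - ky" using t by linarith
    have d: "N - kx < n \<or> b1 - ky < n \<or> (N - kx) + (b1 - ky) < n + 2 * \<tau>" using R1 pre by blast
    then show False using c cov S1b h mn by (elim disjE) linarith+
  qed
  have S2b: "a1 - kx < n"
  proof (rule ccontr)
    assume c: "\<not> a1 - kx < n"
    have "a1 - kx + (N - ky) \<ge> N + 1" using c cov S1a h mn by linarith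
    then have pre: "2 * \<tau> < a1 - kx \<or> 2 * \<tau> < N - ky" using t by linarith
    have d: "a1 - kx < n \<or> N - ky < n \<or> (a1 - kx) + (N - ky) < n + 2 * \<tau>" using R2 pre by blast
    then show False using c cov S1a h mn by (elim disjE) linarith+
  qed
  have S3: "a2 + b2 \<ge> m + 1" using S2a S2b cov a12 b12 mn by linarith
  have a2n: "a2 < n" and b2n: "b2 < n" using S1a S1b a12 b12 mn by linarith+
  have Aeq: "A + jx = a1" and Beq: "B + jy = b1" using cov by (simp_all add: A_def B_def)
  have nboth: "\<not> (0 < jx \<and> 0 < jy)"
  proof
    assume "0 < jx \<and> 0 < jy"
    then have "a2 \<le> \<tau>" "b2 \<le> \<tau>" using J by auto
    then show False using S3 h by linarith
  qed
  from K show False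
  proof (elim disjE conjE)
    assume k: "A \<le> kx"
    show False
    proof (cases "jx = 0")
      case True then show False using k Aeq S2a cov a12 b12 a2n b2n mn by linarith
    next
      case False
      then have "b2 \<le> \<tau>" using J by auto
      then show False using k Aeq S2a cov a12 b12 a2n J(1) h mn by linarith
    qed
  next
    assume k: "B \<le> ky"
    show False
    proof (cases "jy = 0")
      case True then show False using k Beq S2b cov a12 b12 a2n b2n mn by linarith
    next
      case False
      then have "a2 \<le> \<tau>" using J by auto
      then show False using k Beq S2b cov a12 b12 b2n J(2) h mn by linarith
    qed
  next
    assume k1: "A \<le> kx + \<tau>" and k2: "B \<le> ky + \<tau>"
    show False
    proof (cases "jx = 0"; cases "jy = 0")
      assume "jx = 0" "jy = 0"
      then show False using k1 k2 Aeq Beq cov a12 b12 a2n b2n h mn by linarith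
    next
      assume "jx = 0" "jy \<noteq> 0"
      then have "a2 \<le> \<tau>" using J by auto
      then show False using k1 k2 Aeq Beq cov a12 b12 b2n J(2) h mn \<open>jx = 0\<close> t by linarith
    next
      assume "jx \<noteq> 0" "jy = 0"
      then have "b2 \<le> \<tau>" using J by auto
      then show False using k1 k2 Aeq Beq cov a12 b12 a2n J(1) h mn \<open>jy = 0\<close> t by linarith
    next
      assume "jx \<noteq> 0" "jy \<noteq> 0"
      then show False using nboth by auto
    qed
  qed
qed


lemma arithB:
  assumes mc: "modelc N \<tau> n m a1 b1 jx jy kx ky" and mn: "n < m" "0 < n" "N = m + n - 1"
    and t: "4 * \<tau> < N" and hA: "\<tau> < a1 - jx" and hB: "\<tau> < b1 - jy"
  shows False
proof -
  define a2 where "a2 = N - a1"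
  define b2 where "b2 = N - b1"
  define A where "A = a1 - jx"
  define B where "B = b1 - jy"
  have c1: "a1 < N" and c2: "b1 < N" and c3: "\<not> T1ok \<tau> a1 (N - b1) m" and c4: "\<not> T1ok \<tau> (N - a1) b1 m"
    and c5: "(2 * \<tau> < N - a1 \<or> 2 * \<tau> < N - b1) \<longrightarrow> \<not> T1ok \<tau> (N - a1) (N - b1) n"
    and c6: "kx + ky < n" and c7: "kx \<le> a1" and c8: "ky \<le> b1" and c9: "jx \<le> a1" and c10: "jy \<le> b1"
    and c11: "a1 - jx \<le> kx \<or> b1 - jy \<le> ky \<or> (a1 - jx \<le> kx + \<tau> \<and> b1 - jy \<le> ky + \<tau>)"
    and c12: "(2 * \<tau> < N - kx \<or> 2 * \<tau> < b1 - ky) \<longrightarrow> \<not> T1ok \<tau> (N - kx) (b1 - ky) m"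
    and c13: "(2 * \<tau> < a1 - kx \<or> 2 * \<tau> < N - ky) \<longrightarrow> \<not> T1ok \<tau> (a1 - kx) (N - ky) m"
    and c14: "jx \<le> \<tau>" and c15: "jy \<le> \<tau>" and c16: "0 < jx \<longrightarrow> N - b1 \<le> \<tau>" and c17: "0 < jy \<longrightarrow> N - a1 \<le> \<tau>"
    using mc unfolding modelc_def by blast+
  have a12: "a1 + a2 = N" and b12: "b1 + b2 = N" using c1 c2 by (simp_all add: a2_def b2_def)
  have q1: "a1 < m \<or> b2 < m \<or> a1 + b2 < m + 2 * \<tau>"
    using c3 unfolding T1ok_def b2_def by linarith
  have q2: "a2 < m \<or> b1 < m \<or> a2 + b1 < m + 2 * \<tau>"
    using c4 unfolding T1ok_def a2_def by linarith
  have q3: "(2 * \<tau> < a2 \<or> 2 * \<tau> < b2) \<longrightarrow> (a2 < n \<or> b2 < n \<or> a2 + b2 < n + 2 * \<tau>)"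
    using c5 unfolding T1ok_def a2_def b2_def by linarith
  have cov: "kx + ky < n" "kx \<le> a1" "ky \<le> b1" "jx \<le> a1" "jy \<le> b1"
    using c6 c7 c8 c9 c10 by auto
  have K: "A \<le> kx \<or> B \<le> ky \<or> (A \<le> kx + \<tau> \<and> B \<le> ky + \<tau>)"
    using c11 unfolding A_def B_def .
  have R1: "(2 * \<tau> < N - kx \<or> 2 * \<tau> < b1 - ky) \<longrightarrow> (N - kx < m \<or> b1 - ky < m \<or> (N - kx) + (b1 - ky) < m + 2 * \<tau>)"
    using c12 unfolding T1ok_def by linarith
  have R2: "(2 * \<tau> < a1 - kx \<or> 2 * \<tau> < N - ky) \<longrightarrow> (a1 - kx < m \<or> N - ky < m \<or> (a1 - kx) + (N - ky) < m + 2 * \<tau>)"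
    using c13 unfolding T1ok_def by linarith
  have J: "jx \<le> \<tau>" "jy \<le> \<tau>" "0 < jx \<longrightarrow> b2 \<le> \<tau>" "0 < jy \<longrightarrow> a2 \<le> \<tau>"
    using c14 c15 c16 c17 unfolding a2_def b2_def by auto
  have h: "2 * n \<le> N" "2 * \<tau> < m" "n + 2 * \<tau> < N" using mn t by linarith+
  have q3': "a2 < n \<or> b2 < n \<or> a2 + b2 < n + 2 * \<tau> \<or> (a2 \<le> 2 * \<tau> \<and> b2 \<le> 2 * \<tau>)"
    using q3 by linarith
  have S2a: "b1 - ky < m"
  proof (rule ccontr)
    assume c: "\<not> b1 - ky < m"
    have pre: "2 * \<tau> < N - kx" using cov h mn by linarith
    have d: "N - kx < m \<or> b1 - ky < m \<or> (N - kx) + (b1 - ky) < m + 2 * \<tau>" using R1 pre by blast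
    then show False using c cov h mn by (elim disjE) linarith+
  qed
  have S2b: "a1 - kx < m"
  proof (rule ccontr)
    assume c: "\<not> a1 - kx < m"
    have pre: "2 * \<tau> < N - ky" using cov h mn by linarith
    have d: "a1 - kx < m \<or> N - ky < m \<or> (a1 - kx) + (N - ky) < m + 2 * \<tau>" using R2 pre by blast
    then show False using c cov h mn by (elim disjE) linarith+
  qed
  have Aeq: "A + jx = a1" and Beq: "B + jy = b1" using cov by (simp_all add: A_def B_def)
  have hA': "\<tau> < A" and hB': "\<tau> < B" using hA hB by (simp_all add: A_def B_def)
  have fin: "a2 + b2 \<ge> N + 1 \<Longrightarrow> False"
  proof -
    assume s: "a2 + b2 \<ge> N + 1"
    have "a2 < n \<or> b2 < n" using q3' s h t mn by linarith
    then show False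
    proof
      assume "a2 < n"
      then have "m \<le> a1" "m \<le> b2" using a12 s mn by linarith+
      then show False using q1 h mn by linarith
    next
      assume "b2 < n"
      then have "m \<le> b1" "m \<le> a2" using b12 s mn by linarith+
      then show False using q2 h mn by linarith
    qed
  qed
  from K show False
  proof (elim disjE conjE)
    assume k: "A \<le> kx"
    have "A < b2" using k S2a cov b12 mn by linarith
    then have "jx = 0" using J hA' by (metis le_less_trans less_asym' neq0_conv)
    then have "a2 + b2 \<ge> N + 1" using \<open>A < b2\<close> Aeq a12 b12 by linarith
    then show False by (rule fin)
  next
    assume k: "B \<le> ky"
    have "B < a2" using k S2b cov a12 mn by linarith
    then have "jy = 0" using J hB' by (metis le_less_trans less_asym' neq0_conv)
    then have "a2 + b2 \<ge> N + 1" using \<open>B < a2\<close> Beq a12 b12 by linarith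
    then show False by (rule fin)
  next
    assume k1: "A \<le> kx + \<tau>" and k2: "B \<le> ky + \<tau>"
    show False
    proof (cases "jx = 0"; cases "jy = 0")
      assume "jx = 0" "jy = 0"
      then have "a1 + b1 < n + 2 * \<tau>" using k1 k2 Aeq Beq cov by linarith
      then have "a2 + b2 \<ge> N + 1" using a12 b12 h mn t by linarith
      then show False by (rule fin)
    next
      assume "jx = 0" "jy \<noteq> 0"
      then have "a2 \<le> \<tau>" using J by auto
      then show False using k1 Aeq cov a12 J(1) h mn \<open>jx = 0\<close> t by linarith
    next
      assume "jx \<noteq> 0" "jy = 0"
      then have "b2 \<le> \<tau>" using J by auto
      then show False using k2 Beq cov b12 J(2) h mn \<open>jy = 0\<close> t by linarith
    next
      assume "jx \<noteq> 0" "jy \<noteq> 0"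
      then have "a2 \<le> \<tau>" "b2 \<le> \<tau>" using J by auto
      then show False using k1 k2 Aeq Beq cov a12 b12 J(1,2) h mn t by linarith
    qed
  qed
qed

lemma (in bip) T1ok_match:
  assumes "T1ok \<tau> (card P) (card Q) r" and "P \<subseteq> X" "Q \<subseteq> Y" "F \<subseteq> E"
    and "\<And>x y. x \<in> P \<Longrightarrow> y \<in> Q \<Longrightarrow> {x, y} \<in> E \<Longrightarrow> {x, y} \<in> F"
    and "2 * \<tau> < card P \<or> 2 * \<tau> < card Q \<or> (\<exists>w. \<forall>x\<in>P. connected_in F w x) \<or> (\<exists>w. \<forall>y\<in>Q. connected_in F w y)"
  shows "has_connected_k_matching F r"
  using assms T1conn[of P Q F r] unfolding T1ok_def by blast

lemma (in bip) card_diff_X: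
  assumes "S \<subseteq> X" shows "card (X - S) = N - card S"
  using assms finX cX by (simp add: card_Diff_subset finite_subset)

lemma (in bip) card_diff_Y:
  assumes "S \<subseteq> Y" shows "card (Y - S) = N - card S"
  using assms finY cY by (simp add: card_Diff_subset finite_subset)

lemma (in bip) card_KXY:
  assumes "finite K" shows "card (K \<inter> X) + card (K \<inter> Y) \<le> card K"
proof -
  have "card (K \<inter> X) + card (K \<inter> Y) = card ((K \<inter> X) \<union> (K \<inter> Y))"
    using assms disj by (intro card_Un_disjoint[symmetric]) auto
  also have "\<dots> \<le> card K" using assms by (intro card_mono) auto
  finally show ?thesis .
qed

locale col = bip +
  fixes F F' :: "'a set set" and k k' :: nat
  assumes FE: "F \<union> F' = E" and FF: "F \<inter> F' = {}"
    and kk: "k + k' = N + 1" and k1: "1 \<le> k" and k1': "1 \<le> k'"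
    and noF: "\<not> has_connected_k_matching F k"
    and noF': "\<not> has_connected_k_matching F' k'"

lemma col_swap:
  assumes "col X Y E N \<tau> F F' k k'" shows "col Y X E N \<tau> F F' k k'"
proof -
  have b: "bip X Y E N \<tau>" and a: "col_axioms E N F F' k k'" using assms unfolding col_def by blast+
  show ?thesis unfolding col_def using bip_swap[OF b] a by blast
qed

lemma col_flip:
  assumes "col X Y E N \<tau> F F' k k'" shows "col X Y E N \<tau> F' F k' k"
proof -
  have b: "bip X Y E N \<tau>" and a: "col_axioms E N F F' k k'" using assms unfolding col_def by blast+
  have "col_axioms E N F' F k' k" using a unfolding col_axioms_def by (simp add: Un_commute Int_commute add.commute)
  then show ?thesis unfolding col_def using b by blast
qed

context col
begin

lemma FsubE: "F \<subseteq> E" using FE by blast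
lemma F'subE: "F' \<subseteq> E" using FE by blast

lemma cover:
  obtains K where "finite K" "K \<subseteq> mcomp F w" "card K < k" "\<forall>e\<in>F. e \<subseteq> mcomp F w \<longrightarrow> e \<inter> K \<noteq> {}"
proof -
  define C where "C = mcomp F w"
  have finP: "finite (X \<inter> C)" using finX by simp
  from koenig[OF finP finY, of k "\<lambda>x y. {x, y} \<in> F"]
  show thesis
  proof (elim disjE exE conjE)
    fix P' f assume P': "P' \<subseteq> X \<inter> C" "card P' = k" "inj_on f P'" "\<forall>x\<in>P'. f x \<in> Y \<and> {x, f x} \<in> F"
    have finP': "finite P'" using finite_subset[OF P'(1) finP] .
    have P'X: "P' \<subseteq> X" using P'(1) by blast
    have fY: "f ` P' \<subseteq> Y" using P'(4) by blast
    have inF: "\<forall>x\<in>P'. {x, f x} \<in> F" using P'(4) by blast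
    have cn: "\<forall>x\<in>P'. connected_in F w x \<and> connected_in F w (f x)"
    proof
      fix x assume x: "x \<in> P'"
      have xc: "x \<in> C" using x P'(1) by blast
      have fxc: "f x \<in> C" using comp_edge[of x "f x" F w] inF x xc by (simp add: C_def)
      show "connected_in F w x \<and> connected_in F w (f x)" using xc fxc by (simp add: C_def comp_conn)
    qed
    have "has_connected_k_matching F k" using pairs_conn_match[OF finP' P'X fY disj P'(3) inF cn P'(2)] .
    then show thesis using noF by blast
  next
    fix SP SQ assume S: "SP \<subseteq> X \<inter> C" "SQ \<subseteq> Y" "card SP + card SQ < k"
      "\<forall>x\<in>X \<inter> C. \<forall>y\<in>Y. {x, y} \<in> F \<longrightarrow> x \<in> SP \<or> y \<in> SQ"
    define K where "K = SP \<union> (SQ \<inter> C)"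
    have finSP: "finite SP" using finite_subset[OF S(1) finP] .
    have finSQ: "finite SQ" using finite_subset[OF S(2) finY] .
    have finK: "finite K" using finSP finSQ by (simp add: K_def)
    have KC: "K \<subseteq> C" using S(1) by (auto simp: K_def)
    have "card K \<le> card SP + card (SQ \<inter> C)" unfolding K_def by (rule card_Un_le)
    also have "card (SQ \<inter> C) \<le> card SQ" using finSQ by (intro card_mono) auto
    finally have cK: "card K < k" using S(3) by linarith
    have cov: "\<forall>e\<in>F. e \<subseteq> C \<longrightarrow> e \<inter> K \<noteq> {}"
    proof (intro ballI impI)
      fix e assume e: "e \<in> F" "e \<subseteq> C"
      have "e \<in> E" using e(1) FsubE by blast
      then obtain x y where xy: "x \<in> X" "y \<in> Y" "e = {x, y}" by (rule edge_XY)
      have "x \<in> C" "y \<in> C" using e(2) xy(3) by auto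
      then have "x \<in> SP \<or> y \<in> SQ" using S(4) xy e(1) by blast
      then show "e \<inter> K \<noteq> {}" using \<open>y \<in> C\<close> xy(3) by (auto simp: K_def)
    qed
    show thesis using that[OF finK] KC cK cov by (simp add: C_def)
  qed
qed

lemma cover_edge:
  assumes "\<forall>e\<in>F. e \<subseteq> mcomp F w \<longrightarrow> e \<inter> K \<noteq> {}" and "{x, y} \<in> F" and "x \<in> mcomp F w \<or> y \<in> mcomp F w"
  shows "x \<in> K \<or> y \<in> K"
proof -
  have "x \<in> mcomp F w" "y \<in> mcomp F w"
    using assms(2,3) comp_edge[of x y F w] comp_edge'[of x y F w] by blast+
  then have "{x, y} \<subseteq> mcomp F w" by blast
  then have "{x, y} \<inter> K \<noteq> {}" using assms(1,2) by blast
  then show ?thesis by blast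
qed

lemma not_span: "\<not> X \<subseteq> mcomp F w"
proof
  assume XC: "X \<subseteq> mcomp F w"
  obtain K where K: "finite K" "K \<subseteq> mcomp F w" "card K < k" "\<forall>e\<in>F. e \<subseteq> mcomp F w \<longrightarrow> e \<inter> K \<noteq> {}"
    by (rule cover)
  define P where "P = X - K"
  define Q where "Q = Y - K"
  have PX: "P \<subseteq> X" and QY: "Q \<subseteq> Y" by (auto simp: P_def Q_def)
  have col': "{x, y} \<in> F'" if x: "x \<in> P" and y: "y \<in> Q" and e: "{x, y} \<in> E" for x y
  proof (rule ccontr)
    assume "{x, y} \<notin> F'"
    then have eF: "{x, y} \<in> F" using e FE by blast
    have "x \<in> mcomp F w" using x XC by (auto simp: P_def)
    then have "x \<in> K \<or> y \<in> K" using cover_edge[OF K(4) eF] by blast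
    then show False using x y by (auto simp: P_def Q_def)
  qed
  have cP: "card P = N - card (K \<inter> X)"
  proof -
    have "P = X - (K \<inter> X)" by (auto simp: P_def)
    then show ?thesis using card_diff_X[of "K \<inter> X"] by simp
  qed
  have cQ: "card Q = N - card (K \<inter> Y)"
  proof -
    have "Q = Y - (K \<inter> Y)" by (auto simp: Q_def)
    then show ?thesis using card_diff_Y[of "K \<inter> Y"] by simp
  qed
  have ck: "card (K \<inter> X) + card (K \<inter> Y) \<le> card K" using card_KXY[OF K(1)] .
  have "has_connected_k_matching F' k'"
  proof (rule T1conn[OF PX QY F'subE])
    show "\<And>x y. x \<in> P \<Longrightarrow> y \<in> Q \<Longrightarrow> {x, y} \<in> E \<Longrightarrow> {x, y} \<in> F'" using col' by blast
    show "k' \<le> card P" using cP ck K(3) kk by linarith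
    show "k' \<le> card Q" using cQ ck K(3) kk by linarith
    show "k' + 2 * \<tau> \<le> card P + card Q" using cP cQ ck K(3) kk tau by linarith
    show "2 * \<tau> < card P \<or> 2 * \<tau> < card Q \<or> (\<exists>w. \<forall>x\<in>P. connected_in F' w x) \<or> (\<exists>w. \<forall>y\<in>Q. connected_in F' w y)"
      using cP cQ ck K(3) kk tau by linarith
  qed
  then show False using noF' by blast
qed

end

context col
begin

lemma model:
  assumes C: "C = mcomp F w" and D1: "D1 = mcomp F' w1" and D2: "D2 = mcomp F' w2"
    and D12: "D1 \<inter> D2 = {}" and XC: "X - C \<subseteq> D2" and YC: "Y - C \<subseteq> D1"
    and XCne: "X - C \<noteq> {}" and YCne: "Y - C \<noteq> {}"
  shows "\<exists>a1 b1 jx jy kx ky. a1 - jx = card (X \<inter> C \<inter> D1) \<and> b1 - jy = card (Y \<inter> C \<inter> D2) \<and>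
           modelc N \<tau> k k' a1 b1 jx jy kx ky"
proof -
  define a1 where "a1 = card (X \<inter> C)"
  define b1 where "b1 = card (Y \<inter> C)"
  define A where "A = X \<inter> C \<inter> D1"
  define B where "B = Y \<inter> C \<inter> D2"
  define jx where "jx = card (X \<inter> C - D1)"
  define jy where "jy = card (Y \<inter> C - D2)"
  obtain K where K: "finite K" "K \<subseteq> C" "card K < k" "\<forall>e\<in>F. e \<subseteq> mcomp F w \<longrightarrow> e \<inter> K \<noteq> {}"
    using cover C by metis
  define kx where "kx = card (K \<inter> X)"
  define ky where "ky = card (K \<inter> Y)"
  have finXC: "finite (X \<inter> C)" using finX by simp
  have finYC: "finite (Y \<inter> C)" using finY by simp
  have a1jx: "a1 = card A + jx"
  proof -
    have e: "X \<inter> C = A \<union> (X \<inter> C - D1)" by (auto simp: A_def)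
    have "card (A \<union> (X \<inter> C - D1)) = card A + card (X \<inter> C - D1)"
      by (rule card_Un_disjoint) (use finXC in \<open>auto simp: A_def\<close>)
    then show ?thesis unfolding a1_def jx_def using e by simp
  qed
  have b1jy: "b1 = card B + jy"
  proof -
    have e: "Y \<inter> C = B \<union> (Y \<inter> C - D2)" by (auto simp: B_def)
    have "card (B \<union> (Y \<inter> C - D2)) = card B + card (Y \<inter> C - D2)"
      by (rule card_Un_disjoint) (use finYC in \<open>auto simp: B_def\<close>)
    then show ?thesis unfolding b1_def jy_def using e by simp
  qed
  have ck: "kx + ky \<le> card K" unfolding kx_def ky_def by (rule card_KXY[OF K(1)])
  have kxa: "kx \<le> a1" unfolding kx_def a1_def using finXC K(2) by (intro card_mono) auto
  have kyb: "ky \<le> b1" unfolding ky_def b1_def using finYC K(2) by (intro card_mono) auto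
  have cXC: "card (X - C) = N - a1"
  proof -
    have "X - C = X - (X \<inter> C)" by blast
    then show ?thesis using card_diff_X[of "X \<inter> C"] by (simp add: a1_def)
  qed
  have cYC: "card (Y - C) = N - b1"
  proof -
    have "Y - C = Y - (Y \<inter> C)" by blast
    then show ?thesis using card_diff_Y[of "Y \<inter> C"] by (simp add: b1_def)
  qed
  have a1N: "a1 < N"
  proof -
    have "X \<inter> C \<subset> X" using XCne by blast
    then show ?thesis using psubset_card_mono[OF finX] cX by (simp add: a1_def)
  qed
  have b1N: "b1 < N"
  proof -
    have "Y \<inter> C \<subset> Y" using YCne by blast
    then show ?thesis using psubset_card_mono[OF finY] cY by (simp add: b1_def)
  qed
  have inC: "y \<in> C" if "{x, y} \<in> F" "x \<in> C" for x y using comp_edge[of x y F w] that C by simp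
  have inC': "x \<in> C" if "{x, y} \<in> F" "y \<in> C" for x y using comp_edge'[of x y F w] that C by simp
  have inD1: "y \<in> D1" if "{x, y} \<in> F'" "x \<in> D1" for x y using comp_edge[of x y F' w1] that D1 by simp
  have inD1': "x \<in> D1" if "{x, y} \<in> F'" "y \<in> D1" for x y using comp_edge'[of x y F' w1] that D1 by simp
  have inD2: "y \<in> D2" if "{x, y} \<in> F'" "x \<in> D2" for x y using comp_edge[of x y F' w2] that D2 by simp
  have orF: "\<And>e. e \<in> E \<Longrightarrow> e \<notin> F \<Longrightarrow> e \<in> F'" using FE by blast
  have orF': "\<And>e. e \<in> E \<Longrightarrow> e \<notin> F' \<Longrightarrow> e \<in> F" using FE by blast
  have KE: "x \<in> K \<or> y \<in> K" if "{x, y} \<in> F" "x \<in> C \<or> y \<in> C" for x y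
    using cover_edge[OF K(4) that(1)] that(2) C by simp
  have Q1: "\<not> T1ok \<tau> a1 (N - b1) k'"
  proof
    assume T: "T1ok \<tau> a1 (N - b1) k'"
    have "has_connected_k_matching F' k'"
    proof (rule T1ok_match[of "X \<inter> C" "Y - C"])
      show "T1ok \<tau> (card (X \<inter> C)) (card (Y - C)) k'" using T cYC by (simp add: a1_def)
      show "X \<inter> C \<subseteq> X" "Y - C \<subseteq> Y" "F' \<subseteq> E" using F'subE by auto
      show "{x, y} \<in> F'" if xy: "x \<in> X \<inter> C" "y \<in> Y - C" "{x, y} \<in> E" for x y
      proof (rule ccontr)
        assume "{x, y} \<notin> F'"
        then have "{x, y} \<in> F" using orF' xy(3) by blast
        then have "y \<in> C" using inC xy(1) by blast
        then show False using xy(2) by blast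
      qed
      have "\<forall>y\<in>Y - C. connected_in F' w1 y"
      proof
        fix y assume "y \<in> Y - C"
        then have "y \<in> mcomp F' w1" using YC D1 by blast
        then show "connected_in F' w1 y" by (rule comp_conn)
      qed
      then show "2 * \<tau> < card (X \<inter> C) \<or> 2 * \<tau> < card (Y - C) \<or> (\<exists>w. \<forall>x\<in>X \<inter> C. connected_in F' w x) \<or> (\<exists>w. \<forall>y\<in>Y - C. connected_in F' w y)"
        by blast
    qed
    then show False using noF' by blast
  qed
  have Q2: "\<not> T1ok \<tau> (N - a1) b1 k'"
  proof
    assume T: "T1ok \<tau> (N - a1) b1 k'"
    have "has_connected_k_matching F' k'"
    proof (rule T1ok_match[of "X - C" "Y \<inter> C"])
      show "T1ok \<tau> (card (X - C)) (card (Y \<inter> C)) k'" using T cXC by (simp add: b1_def)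
      show "X - C \<subseteq> X" "Y \<inter> C \<subseteq> Y" "F' \<subseteq> E" using F'subE by auto
      show "{x, y} \<in> F'" if xy: "x \<in> X - C" "y \<in> Y \<inter> C" "{x, y} \<in> E" for x y
      proof (rule ccontr)
        assume "{x, y} \<notin> F'"
        then have "{x, y} \<in> F" using orF' xy(3) by blast
        then have "x \<in> C" using inC' xy(2) by blast
        then show False using xy(1) by blast
      qed
      have "\<forall>x\<in>X - C. connected_in F' w2 x"
      proof
        fix x assume "x \<in> X - C"
        then have "x \<in> mcomp F' w2" using XC D2 by blast
        then show "connected_in F' w2 x" by (rule comp_conn)
      qed
      then show "2 * \<tau> < card (X - C) \<or> 2 * \<tau> < card (Y \<inter> C) \<or> (\<exists>w. \<forall>x\<in>X - C. connected_in F' w x) \<or> (\<exists>w. \<forall>y\<in>Y \<inter> C. connected_in F' w y)"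
        by blast
    qed
    then show False using noF' by blast
  qed
  have Q3: "(2 * \<tau> < N - a1 \<or> 2 * \<tau> < N - b1) \<longrightarrow> \<not> T1ok \<tau> (N - a1) (N - b1) k"
  proof (intro impI notI)
    assume pre: "2 * \<tau> < N - a1 \<or> 2 * \<tau> < N - b1" and T: "T1ok \<tau> (N - a1) (N - b1) k"
    have "has_connected_k_matching F k"
    proof (rule T1ok_match[of "X - C" "Y - C"])
      show "T1ok \<tau> (card (X - C)) (card (Y - C)) k" using T cXC cYC by simp
      show "X - C \<subseteq> X" "Y - C \<subseteq> Y" "F \<subseteq> E" using FsubE by auto
      show "{x, y} \<in> F" if xy: "x \<in> X - C" "y \<in> Y - C" "{x, y} \<in> E" for x y
      proof (rule ccontr)
        assume "{x, y} \<notin> F"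
        then have e: "{x, y} \<in> F'" using xy(3) orF by blast
        have "x \<in> D2" "y \<in> D1" using xy XC YC by auto
        then have "y \<in> D2" using inD2 e by blast
        then show False using \<open>y \<in> D1\<close> D12 by blast
      qed
      show "2 * \<tau> < card (X - C) \<or> 2 * \<tau> < card (Y - C) \<or> (\<exists>w. \<forall>x\<in>X - C. connected_in F w x) \<or> (\<exists>w. \<forall>y\<in>Y - C. connected_in F w y)"
        unfolding cXC cYC using pre by blast
    qed
    then show False using noF by blast
  qed
  have ABedge: "x \<in> K \<or> y \<in> K" if x: "x \<in> A" and y: "y \<in> B" and e: "{x, y} \<in> E" for x y
  proof -
    have eF: "{x, y} \<in> F"
    proof (rule ccontr)
      assume "{x, y} \<notin> F"
      then have e': "{x, y} \<in> F'" using e orF by blast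
      have "x \<in> D1" using x by (simp add: A_def)
      then have "y \<in> D1" using inD1 e' by blast
      then show False using y D12 by (auto simp: B_def)
    qed
    have "x \<in> C" using x by (simp add: A_def)
    then show ?thesis using KE[OF eF] by blast
  qed
  have Kc: "card A \<le> kx \<or> card B \<le> ky \<or> (card A \<le> kx + \<tau> \<and> card B \<le> ky + \<tau>)"
  proof (cases "A - K = {}")
    case True
    then have "A \<subseteq> K \<inter> X" by (auto simp: A_def)
    then have "card A \<le> kx" unfolding kx_def using K(1) by (intro card_mono) auto
    then show ?thesis by blast
  next
    case False
    then obtain a0 where a0: "a0 \<in> A" "a0 \<notin> K" by blast
    show ?thesis
    proof (cases "B - K = {}")
      case True
      then have "B \<subseteq> K \<inter> Y" by (auto simp: B_def)
      then have "card B \<le> ky" unfolding ky_def using K(1) by (intro card_mono) auto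
      then show ?thesis by blast
    next
      case False
      then obtain b0 where b0: "b0 \<in> B" "b0 \<notin> K" by blast
      have a0X: "a0 \<in> X" using a0 by (simp add: A_def)
      have b0Y: "b0 \<in> Y" using b0 by (simp add: B_def)
      have c1: "card (B - K) \<le> \<tau>"
      proof (rule nn_sub_X[OF a0X])
        show "B - K \<subseteq> Y" by (auto simp: B_def)
        show "\<forall>y\<in>B - K. {a0, y} \<notin> E" using ABedge a0 by blast
      qed
      have c2: "card (A - K) \<le> \<tau>"
      proof (rule nn_sub_Y[OF b0Y])
        show "A - K \<subseteq> X" by (auto simp: A_def)
        show "\<forall>x\<in>A - K. {x, b0} \<notin> E" using ABedge b0 by blast
      qed
      have finA: "finite A" using finXC by (simp add: A_def)
      have finB: "finite B" using finYC by (simp add: B_def)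
      have "card A \<le> card ((A - K) \<union> (K \<inter> X))" using finA K(1) by (intro card_mono) (auto simp: A_def)
      also have "\<dots> \<le> card (A - K) + kx" unfolding kx_def by (rule card_Un_le)
      finally have d1: "card A \<le> kx + \<tau>" using c2 by linarith
      have "card B \<le> card ((B - K) \<union> (K \<inter> Y))" using finB K(1) by (intro card_mono) (auto simp: B_def)
      also have "\<dots> \<le> card (B - K) + ky" unfolding ky_def by (rule card_Un_le)
      finally have d2: "card B \<le> ky + \<tau>" using c1 by linarith
      show ?thesis using d1 d2 by blast
    qed
  qed
  have cXK: "card (X - K) = N - kx"
  proof -
    have "X - K = X - (K \<inter> X)" by blast
    then show ?thesis using card_diff_X[of "K \<inter> X"] by (simp add: kx_def)
  qed
  have cYK: "card (Y - K) = N - ky"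
  proof -
    have "Y - K = Y - (K \<inter> Y)" by blast
    then show ?thesis using card_diff_Y[of "K \<inter> Y"] by (simp add: ky_def)
  qed
  have cYCK: "card (Y \<inter> C - K) = b1 - ky"
  proof -
    have "K \<inter> Y \<subseteq> Y \<inter> C" using K(2) by blast
    moreover have "Y \<inter> C - K = (Y \<inter> C) - (K \<inter> Y)" by blast
    ultimately show ?thesis using card_Diff_subset[OF finite_subset[OF _ finYC]] by (simp add: b1_def ky_def)
  qed
  have cXCK: "card (X \<inter> C - K) = a1 - kx"
  proof -
    have "K \<inter> X \<subseteq> X \<inter> C" using K(2) by blast
    moreover have "X \<inter> C - K = (X \<inter> C) - (K \<inter> X)" by blast
    ultimately show ?thesis using card_Diff_subset[OF finite_subset[OF _ finXC]] by (simp add: a1_def kx_def)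
  qed
  have R1: "(2 * \<tau> < N - kx \<or> 2 * \<tau> < b1 - ky) \<longrightarrow> \<not> T1ok \<tau> (N - kx) (b1 - ky) k'"
  proof (intro impI notI)
    assume pre: "2 * \<tau> < N - kx \<or> 2 * \<tau> < b1 - ky" and T: "T1ok \<tau> (N - kx) (b1 - ky) k'"
    have "has_connected_k_matching F' k'"
    proof (rule T1ok_match[of "X - K" "Y \<inter> C - K"])
      show "T1ok \<tau> (card (X - K)) (card (Y \<inter> C - K)) k'" using T cXK cYCK by simp
      show "X - K \<subseteq> X" "Y \<inter> C - K \<subseteq> Y" "F' \<subseteq> E" using F'subE by auto
      show "{x, y} \<in> F'" if xy: "x \<in> X - K" "y \<in> Y \<inter> C - K" "{x, y} \<in> E" for x y
      proof (rule ccontr)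
        assume "{x, y} \<notin> F'"
        then have e: "{x, y} \<in> F" using xy(3) orF' by blast
        have "x \<in> K \<or> y \<in> K" using KE[OF e] xy(2) by blast
        then show False using xy by blast
      qed
      show "2 * \<tau> < card (X - K) \<or> 2 * \<tau> < card (Y \<inter> C - K) \<or> (\<exists>w. \<forall>x\<in>X - K. connected_in F' w x) \<or> (\<exists>w. \<forall>y\<in>Y \<inter> C - K. connected_in F' w y)"
        unfolding cXK cYCK using pre by blast
    qed
    then show False using noF' by blast
  qed
  have R2: "(2 * \<tau> < a1 - kx \<or> 2 * \<tau> < N - ky) \<longrightarrow> \<not> T1ok \<tau> (a1 - kx) (N - ky) k'"
  proof (intro impI notI)
    assume pre: "2 * \<tau> < a1 - kx \<or> 2 * \<tau> < N - ky" and T: "T1ok \<tau> (a1 - kx) (N - ky) k'"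
    have "has_connected_k_matching F' k'"
    proof (rule T1ok_match[of "X \<inter> C - K" "Y - K"])
      show "T1ok \<tau> (card (X \<inter> C - K)) (card (Y - K)) k'" using T cXCK cYK by simp
      show "X \<inter> C - K \<subseteq> X" "Y - K \<subseteq> Y" "F' \<subseteq> E" using F'subE by auto
      show "{x, y} \<in> F'" if xy: "x \<in> X \<inter> C - K" "y \<in> Y - K" "{x, y} \<in> E" for x y
      proof (rule ccontr)
        assume "{x, y} \<notin> F'"
        then have e: "{x, y} \<in> F" using xy(3) orF' by blast
        have "x \<in> K \<or> y \<in> K" using KE[OF e] xy(1) by blast
        then show False using xy by blast
      qed
      show "2 * \<tau> < card (X \<inter> C - K) \<or> 2 * \<tau> < card (Y - K) \<or> (\<exists>w. \<forall>x\<in>X \<inter> C - K. connected_in F' w x) \<or> (\<exists>w. \<forall>y\<in>Y - K. connected_in F' w y)"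
        unfolding cXCK cYK using pre by blast
    qed
    then show False using noF' by blast
  qed
  obtain y0 where y0: "y0 \<in> Y - C" using YCne by blast
  obtain x0 where x0: "x0 \<in> X - C" using XCne by blast
  have noe1: "{x, y} \<notin> E" if x: "x \<in> X \<inter> C - D1" and y: "y \<in> Y - C" for x y
  proof
    assume e: "{x, y} \<in> E"
    show False
    proof (cases "{x, y} \<in> F")
      case True
      then have "y \<in> C" using inC x by blast
      then show False using y by blast
    next
      case False
      then have e': "{x, y} \<in> F'" using e orF by blast
      have "y \<in> D1" using y YC by blast
      then have "x \<in> D1" using inD1' e' by blast
      then show False using x by blast
    qed
  qed
  have noe2: "{x, y} \<notin> E" if x: "x \<in> X - C" and y: "y \<in> Y \<inter> C - D2" for x y
  proof
    assume e: "{x, y} \<in> E"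
    show False
    proof (cases "{x, y} \<in> F")
      case True
      then have "x \<in> C" using inC' y by blast
      then show False using x by blast
    next
      case False
      then have e': "{x, y} \<in> F'" using e orF by blast
      have "x \<in> D2" using x XC by blast
      then have "y \<in> D2" using inD2 e' by blast
      then show False using y by blast
    qed
  qed
  have J1: "jx \<le> \<tau>" unfolding jx_def
    using nn_sub_Y[of y0 "X \<inter> C - D1"] y0 noe1 by blast
  have J2: "jy \<le> \<tau>" unfolding jy_def
    using nn_sub_X[of x0 "Y \<inter> C - D2"] x0 noe2 by blast
  have J3: "0 < jx \<longrightarrow> N - b1 \<le> \<tau>"
  proof
    assume "0 < jx"
    then have "X \<inter> C - D1 \<noteq> {}" unfolding jx_def by (metis card.empty less_irrefl)
    then obtain x where x: "x \<in> X \<inter> C - D1" by blast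
    have "card (Y - C) \<le> \<tau>" using nn_sub_X[of x "Y - C"] x noe1 by blast
    then show "N - b1 \<le> \<tau>" using cYC by simp
  qed
  have J4: "0 < jy \<longrightarrow> N - a1 \<le> \<tau>"
  proof
    assume "0 < jy"
    then have "Y \<inter> C - D2 \<noteq> {}" unfolding jy_def by (metis card.empty less_irrefl)
    then obtain y where y: "y \<in> Y \<inter> C - D2" by blast
    have "card (X - C) \<le> \<tau>" using nn_sub_Y[of y "X - C"] y noe2 by blast
    then show "N - a1 \<le> \<tau>" using cXC by simp
  qed
  have eA: "a1 - jx = card A" using a1jx by simp
  have eB: "b1 - jy = card B" using b1jy by simp
  have kk': "kx + ky < k" using ck K(3) by linarith
  have jxa: "jx \<le> a1" using a1jx by linarith
  have jyb: "jy \<le> b1" using b1jy by linarith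
  have mc: "modelc N \<tau> k k' a1 b1 jx jy kx ky"
    unfolding modelc_def eA eB
    using a1N b1N Q1 Q2 Q3 kk' kxa kyb jxa jyb Kc R1 R2 J1 J2 J3 J4 by (intro conjI) assumption+
  have eA': "a1 - jx = card (X \<inter> C \<inter> D1)" using eA unfolding A_def .
  have eB': "b1 - jy = card (Y \<inter> C \<inter> D2)" using eB unfolding B_def .
  show ?thesis using mc eA' eB' by blast
qed

end

locale main = bip +
  fixes R Bl :: "'a set set" and m n :: nat
  assumes RB1: "R \<union> Bl = E" and RB2: "R \<inter> Bl = {}"
    and mn1: "n < m" and mn2: "0 < n" and mn3: "N = m + n - 1"
    and noR: "\<not> has_connected_k_matching R m" and noB: "\<not> has_connected_k_matching Bl n"

lemma main_swap:
  assumes "main X Y E N \<tau> R Bl m n" shows "main Y X E N \<tau> R Bl m n"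
proof -
  have b: "bip X Y E N \<tau>" and a: "main_axioms E N R Bl m n" using assms unfolding main_def by blast+
  show ?thesis unfolding main_def using bip_swap[OF b] a by blast
qed

context main
begin

lemma main_self: "main X Y E N \<tau> R Bl m n"
proof -
  have "bip X Y E N \<tau>" using finX finY cX cY disj edges nnX nnY tau unfolding bip_def by (intro conjI) assumption+
  moreover have "main_axioms E N R Bl m n" using RB1 RB2 mn1 mn2 mn3 noR noB unfolding main_axioms_def by (intro conjI) assumption+
  ultimately show ?thesis unfolding main_def by blast
qed

lemma colR: "col X Y E N \<tau> R Bl m n"
proof -
  have "bip X Y E N \<tau>" using main_self unfolding main_def by blast
  moreover have "col_axioms E N R Bl m n"
    unfolding col_axioms_def using RB1 RB2 mn1 mn2 mn3 noR noB by (intro conjI) (assumption | linarith)+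
  ultimately show ?thesis unfolding col_def by blast
qed

lemma colB: "col X Y E N \<tau> Bl R n m" using col_flip[OF colR] .

lemma Nge: "2 * \<tau> < N" using tau by linarith

lemma edgeRB: "e \<in> E \<Longrightarrow> e \<in> R \<or> e \<in> Bl" using RB1 by blast

lemma notspan:
  "\<not> X \<subseteq> mcomp R w" "\<not> Y \<subseteq> mcomp R w" "\<not> X \<subseteq> mcomp Bl w" "\<not> Y \<subseteq> mcomp Bl w"
  using col.not_span[OF colR] col.not_span[OF col_swap[OF colR]]
    col.not_span[OF colB] col.not_span[OF col_swap[OF colB]] by blast+

lemma Xne: "X \<noteq> {}" using cX tau by (intro notI) simp

lemma cross_exists: "\<exists>x1\<in>X. \<exists>x2\<in>X. mcomp R x1 \<noteq> mcomp R x2 \<and> mcomp Bl x1 \<noteq> mcomp Bl x2"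
proof -
  obtain x0 where x0: "x0 \<in> X" using Xne by blast
  have "\<exists>x1\<in>X. mcomp R x1 \<noteq> mcomp R x0"
  proof (rule ccontr)
    assume "\<not> ?thesis"
    then have a: "\<forall>x\<in>X. mcomp R x = mcomp R x0" by blast
    have "X \<subseteq> mcomp R x0"
    proof
      fix x assume "x \<in> X"
      then have "mcomp R x = mcomp R x0" using a by blast
      then show "x \<in> mcomp R x0" using comp_self[of x R] by simp
    qed
    then show False using notspan(1) by blast
  qed
  then obtain x1 where x1: "x1 \<in> X" "mcomp R x1 \<noteq> mcomp R x0" by blast
  have "\<exists>x2\<in>X. mcomp Bl x2 \<noteq> mcomp Bl x0"
  proof (rule ccontr)
    assume "\<not> ?thesis"
    then have a: "\<forall>x\<in>X. mcomp Bl x = mcomp Bl x0" by blast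
    have "X \<subseteq> mcomp Bl x0"
    proof
      fix x assume "x \<in> X"
      then have "mcomp Bl x = mcomp Bl x0" using a by blast
      then show "x \<in> mcomp Bl x0" using comp_self[of x Bl] by simp
    qed
    then show False using notspan(3) by blast
  qed
  then obtain x2 where x2: "x2 \<in> X" "mcomp Bl x2 \<noteq> mcomp Bl x0" by blast
  show ?thesis
  proof (cases "mcomp Bl x1 = mcomp Bl x0")
    case False
    then show ?thesis using x1 x0 by blast
  next
    case b1: True
    show ?thesis
    proof (cases "mcomp R x2 = mcomp R x0")
      case False
      then show ?thesis using x2 x0 by blast
    next
      case True
      then show ?thesis using x1 x2 b1 by (intro bexI[of _ x1] bexI[of _ x2]) auto
    qed
  qed
qed

lemma cells_common:
  assumes x1: "x1 \<in> X" and x2: "x2 \<in> X" and cr: "mcomp R x1 \<noteq> mcomp R x2" and cb: "mcomp Bl x1 \<noteq> mcomp Bl x2"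
  shows "N \<le> card {y\<in>Y. y \<in> mcomp R x1 \<and> y \<in> mcomp Bl x2} + card {y\<in>Y. y \<in> mcomp R x2 \<and> y \<in> mcomp Bl x1} + 2 * \<tau>"
proof -
  define W where "W = {y\<in>Y. {x1, y} \<in> E \<and> {x2, y} \<in> E}"
  define Y12 where "Y12 = {y\<in>Y. y \<in> mcomp R x1 \<and> y \<in> mcomp Bl x2}"
  define Y21 where "Y21 = {y\<in>Y. y \<in> mcomp R x2 \<and> y \<in> mcomp Bl x1}"
  have sub: "W \<subseteq> Y12 \<union> Y21"
  proof
    fix y assume y: "y \<in> W"
    have e1: "{x1, y} \<in> E" and e2: "{x2, y} \<in> E" and yY: "y \<in> Y" using y by (auto simp: W_def)
    show "y \<in> Y12 \<union> Y21"
    proof (cases "{x1, y} \<in> R")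
      case True
      have yr1: "y \<in> mcomp R x1" using comp_edge[OF True comp_self] .
      have "{x2, y} \<notin> R"
      proof
        assume r2: "{x2, y} \<in> R"
        have "y \<in> mcomp R x2" using comp_edge[OF r2 comp_self] .
        then have "mcomp R x1 = mcomp R x2" using comp_eqI[OF yr1] by blast
        then show False using cr by blast
      qed
      then have b2: "{x2, y} \<in> Bl" using e2 edgeRB by blast
      have "y \<in> mcomp Bl x2" using comp_edge[OF b2 comp_self] .
      then show ?thesis using yr1 yY by (simp add: Y12_def)
    next
      case False
      then have b1: "{x1, y} \<in> Bl" using e1 edgeRB by blast
      have yb1: "y \<in> mcomp Bl x1" using comp_edge[OF b1 comp_self] .
      have "{x2, y} \<notin> Bl"
      proof
        assume b2: "{x2, y} \<in> Bl"
        have "y \<in> mcomp Bl x2" using comp_edge[OF b2 comp_self] .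
        then have "mcomp Bl x1 = mcomp Bl x2" using comp_eqI[OF yb1] by blast
        then show False using cb by blast
      qed
      then have r2: "{x2, y} \<in> R" using e2 edgeRB by blast
      have "y \<in> mcomp R x2" using comp_edge[OF r2 comp_self] .
      then show ?thesis using yb1 yY by (simp add: Y21_def)
    qed
  qed
  have finY12: "finite Y12" using finY by (simp add: Y12_def)
  have finY21: "finite Y21" using finY by (simp add: Y21_def)
  have cW: "card W \<le> card Y12 + card Y21"
  proof -
    have "card W \<le> card (Y12 \<union> Y21)" using sub finY12 finY21 by (intro card_mono) auto
    also have "\<dots> \<le> card Y12 + card Y21" by (rule card_Un_le)
    finally show ?thesis .
  qed
  have YW: "Y - W \<subseteq> {y\<in>Y. {x1, y} \<notin> E} \<union> {y\<in>Y. {x2, y} \<notin> E}" by (auto simp: W_def)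
  have c1: "card {y\<in>Y. {x1, y} \<notin> E} \<le> \<tau>" using nnX x1 by blast
  have c2: "card {y\<in>Y. {x2, y} \<notin> E} \<le> \<tau>" using nnX x2 by blast
  have "card (Y - W) \<le> card ({y\<in>Y. {x1, y} \<notin> E} \<union> {y\<in>Y. {x2, y} \<notin> E})"
    using YW finY by (intro card_mono) auto
  also have "\<dots> \<le> card {y\<in>Y. {x1, y} \<notin> E} + card {y\<in>Y. {x2, y} \<notin> E}" by (rule card_Un_le)
  finally have cYW: "card (Y - W) \<le> 2 * \<tau>" using c1 c2 by linarith
  have "W \<subseteq> Y" by (auto simp: W_def)
  then have "card (Y - W) = N - card W" using card_diff_Y by blast
  moreover have "card W \<le> N" using \<open>W \<subseteq> Y\<close> finY cY card_mono by metis
  ultimately show ?thesis using cW cYW unfolding Y12_def Y21_def by linarith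
qed

lemma heavy:
  assumes Z: "\<tau> < card {y\<in>Y. y \<in> mcomp R a \<and> y \<in> mcomp Bl b}" and x: "x \<in> X"
  shows "x \<in> mcomp R a \<or> x \<in> mcomp Bl b"
proof (rule ccontr)
  assume nx: "\<not> ?thesis"
  have "card {y\<in>Y. y \<in> mcomp R a \<and> y \<in> mcomp Bl b} \<le> \<tau>"
  proof (rule nn_sub_X[OF x])
    show "{y\<in>Y. y \<in> mcomp R a \<and> y \<in> mcomp Bl b} \<subseteq> Y" by blast
    show "\<forall>y\<in>{y\<in>Y. y \<in> mcomp R a \<and> y \<in> mcomp Bl b}. {x, y} \<notin> E"
    proof (intro ballI notI)
      fix y assume y: "y \<in> {y\<in>Y. y \<in> mcomp R a \<and> y \<in> mcomp Bl b}" and e: "{x, y} \<in> E"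
      have ya: "y \<in> mcomp R a" and yb: "y \<in> mcomp Bl b" using y by auto
      show False
      proof (cases "{x, y} \<in> R")
        case True
        have "x \<in> mcomp R a" using comp_edge'[OF True ya] .
        then show False using nx by blast
      next
        case False
        then have eb: "{x, y} \<in> Bl" using e edgeRB by blast
        have "x \<in> mcomp Bl b" using comp_edge'[OF eb yb] .
        then show False using nx by blast
      qed
    qed
  qed
  then show False using Z by linarith
qed

end

context main
begin

lemma gcl:
  assumes finK: "finite K" and covK: "\<forall>e\<in>R. e \<subseteq> mcomp R a \<longrightarrow> e \<inter> K \<noteq> {}"
    and finL: "finite L" and covL: "\<forall>e\<in>Bl. e \<subseteq> mcomp Bl b \<longrightarrow> e \<inter> L \<noteq> {}"
    and cKL: "card K + card L \<le> N - 1"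
    and big: "2 * \<tau> \<le> card {x\<in>X. x \<in> mcomp R a \<and> x \<in> mcomp Bl b}"
  shows "{x\<in>X. x \<in> mcomp R a \<and> x \<in> mcomp Bl b} \<subseteq> K \<union> L"
proof
  define A where "A = {x\<in>X. x \<in> mcomp R a \<and> x \<in> mcomp Bl b}"
  define W where "W = K \<union> L"
  have finW: "finite W" using finK finL by (simp add: W_def)
  have cW: "card W \<le> N - 1"
  proof -
    have "card W \<le> card K + card L" unfolding W_def by (rule card_Un_le)
    then show ?thesis using cKL by linarith
  qed
  have covR: "x \<in> K \<or> y \<in> K" if e: "{x, y} \<in> R" and xa: "x \<in> mcomp R a" for x y
  proof -
    have "y \<in> mcomp R a" using comp_edge[OF e xa] .
    then have "{x, y} \<subseteq> mcomp R a" using xa by blast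
    then have "{x, y} \<inter> K \<noteq> {}" using covK e by blast
    then show ?thesis by blast
  qed
  have covB: "x \<in> L \<or> y \<in> L" if e: "{x, y} \<in> Bl" and xb: "x \<in> mcomp Bl b" for x y
  proof -
    have "y \<in> mcomp Bl b" using comp_edge[OF e xb] .
    then have "{x, y} \<subseteq> mcomp Bl b" using xb by blast
    then have "{x, y} \<inter> L \<noteq> {}" using covL e by blast
    then show ?thesis by blast
  qed
  have noedge: "{x, y} \<notin> E" if x: "x \<in> A" "x \<notin> W" and y: "y \<notin> W" for x y
  proof
    assume e: "{x, y} \<in> E"
    have xa: "x \<in> mcomp R a" and xb: "x \<in> mcomp Bl b" using x(1) by (auto simp: A_def)
    show False
    proof (cases "{x, y} \<in> R")
      case True
      then have "x \<in> K \<or> y \<in> K" using covR xa by blast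
      then show False using x(2) y by (auto simp: W_def)
    next
      case False
      then have "{x, y} \<in> Bl" using e edgeRB by blast
      then have "x \<in> L \<or> y \<in> L" using covB xb by blast
      then show False using x(2) y by (auto simp: W_def)
    qed
  qed
  have cXY: "card (W \<inter> X) + card (W \<inter> Y) \<le> card W" using card_KXY[OF finW] .
  fix x0 assume x0A: "x0 \<in> {x\<in>X. x \<in> mcomp R a \<and> x \<in> mcomp Bl b}"
  show "x0 \<in> K \<union> L"
  proof (rule ccontr)
    assume nW: "x0 \<notin> K \<union> L"
    have x0: "x0 \<in> A" "x0 \<notin> W" using x0A nW by (auto simp: A_def W_def)
    have x0X: "x0 \<in> X" using x0A by blast
    have c1: "card (Y - W) \<le> \<tau>"
    proof (rule nn_sub_X[OF x0X])
      show "Y - W \<subseteq> Y" by blast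
      show "\<forall>y\<in>Y - W. {x0, y} \<notin> E" using noedge x0 by blast
    qed
    have "card (Y - W) = N - card (W \<inter> Y)"
    proof -
      have "Y - W = Y - (W \<inter> Y)" by blast
      then show ?thesis using card_diff_Y[of "W \<inter> Y"] by simp
    qed
    then have cWY: "N \<le> card (W \<inter> Y) + \<tau>" using c1 by linarith
    have "Y - W \<noteq> {}"
    proof
      assume "Y - W = {}"
      then have "Y \<subseteq> W \<inter> Y" by blast
      then have "N \<le> card (W \<inter> Y)" using cY finW by (metis card_mono finite_Int)
      then show False using cXY cW tau by linarith
    qed
    then obtain y0 where y0: "y0 \<in> Y" "y0 \<notin> W" by blast
    have c2: "card (A - W) \<le> \<tau>"
    proof (rule nn_sub_Y[OF y0(1)])
      show "A - W \<subseteq> X" by (auto simp: A_def)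
      show "\<forall>x\<in>A - W. {x, y0} \<notin> E" using noedge y0(2) by blast
    qed
    have finA: "finite A" using finX by (simp add: A_def)
    have "card A \<le> card ((A - W) \<union> (W \<inter> X))" using finA finW by (intro card_mono) (auto simp: A_def)
    also have "\<dots> \<le> card (A - W) + card (W \<inter> X)" by (rule card_Un_le)
    finally have "card A \<le> card (A - W) + card (W \<inter> X)" .
    then show False using c2 cWY cXY cW big tau unfolding A_def by linarith
  qed
qed

lemma caseS2_half:
  assumes x1: "x1 \<in> X" and x2: "x2 \<in> X" and cr: "mcomp R x1 \<noteq> mcomp R x2" and cb: "mcomp Bl x1 \<noteq> mcomp Bl x2"
    and XA: "\<forall>x\<in>X. (x \<in> mcomp R x1 \<and> x \<in> mcomp Bl x1) \<or> (x \<in> mcomp R x2 \<and> x \<in> mcomp Bl x2)"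
    and YA: "\<forall>y\<in>Y. y \<in> mcomp R x1 \<or> y \<in> mcomp Bl x1"
  shows False
proof -
  have D12: "mcomp Bl x1 \<inter> mcomp Bl x2 = {}" using comp_disj[OF cb] .
  have R12: "mcomp R x1 \<inter> mcomp R x2 = {}" using comp_disj[OF cr] .
  have XC: "X - mcomp R x1 \<subseteq> mcomp Bl x2" using XA by blast
  have YC: "Y - mcomp R x1 \<subseteq> mcomp Bl x1" using YA by blast
  have ne1: "X - mcomp R x1 \<noteq> {}" using notspan(1) by blast
  have ne2: "Y - mcomp R x1 \<noteq> {}" using notspan(2) by blast
  obtain a1 b1 jx jy kx ky where "modelc N \<tau> m n a1 b1 jx jy kx ky"
    using col.model[OF colR refl refl refl D12 XC YC ne1 ne2] by blast
  then show False using arithR mn1 mn2 mn3 tau by blast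
qed

lemma caseS2:
  assumes x1: "x1 \<in> X" and x2: "x2 \<in> X" and cr: "mcomp R x1 \<noteq> mcomp R x2" and cb: "mcomp Bl x1 \<noteq> mcomp Bl x2"
    and h12: "\<tau> < card {y\<in>Y. y \<in> mcomp R x1 \<and> y \<in> mcomp Bl x2}"
    and h21: "\<tau> < card {y\<in>Y. y \<in> mcomp R x2 \<and> y \<in> mcomp Bl x1}"
  shows False
proof -
  have R12: "mcomp R x1 \<inter> mcomp R x2 = {}" using comp_disj[OF cr] .
  have B12: "mcomp Bl x1 \<inter> mcomp Bl x2 = {}" using comp_disj[OF cb] .
  have XA: "\<forall>x\<in>X. (x \<in> mcomp R x1 \<and> x \<in> mcomp Bl x1) \<or> (x \<in> mcomp R x2 \<and> x \<in> mcomp Bl x2)"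
  proof
    fix x assume x: "x \<in> X"
    have a: "x \<in> mcomp R x1 \<or> x \<in> mcomp Bl x2" using heavy[OF h12 x] .
    have b: "x \<in> mcomp R x2 \<or> x \<in> mcomp Bl x1" using heavy[OF h21 x] .
    show "(x \<in> mcomp R x1 \<and> x \<in> mcomp Bl x1) \<or> (x \<in> mcomp R x2 \<and> x \<in> mcomp Bl x2)"
      using a b R12 B12 by blast
  qed
  define A1 where "A1 = {x\<in>X. x \<in> mcomp R x1 \<and> x \<in> mcomp Bl x1}"
  define A2 where "A2 = {x\<in>X. x \<in> mcomp R x2 \<and> x \<in> mcomp Bl x2}"
  have "X \<subseteq> A1 \<union> A2" using XA by (auto simp: A1_def A2_def)
  then have "N \<le> card (A1 \<union> A2)" using cX finX by (metis card_mono finite_Un finite_subset Collect_subset A1_def A2_def)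
  also have "\<dots> \<le> card A1 + card A2" by (rule card_Un_le)
  finally have cA: "N \<le> card A1 + card A2" .
  show False
  proof (cases "\<tau> < card A1")
    case True
    have YA: "\<forall>y\<in>Y. y \<in> mcomp R x1 \<or> y \<in> mcomp Bl x1"
      using main.heavy[OF main_swap[OF main_self]] True unfolding A1_def by blast
    show False using caseS2_half[OF x1 x2 cr cb XA YA] .
  next
    case False
    then have T2: "\<tau> < card A2" using cA Nge by linarith
    have YA: "\<forall>y\<in>Y. y \<in> mcomp R x2 \<or> y \<in> mcomp Bl x2"
      using main.heavy[OF main_swap[OF main_self]] T2 unfolding A2_def by blast
    have XA': "\<forall>x\<in>X. (x \<in> mcomp R x2 \<and> x \<in> mcomp Bl x2) \<or> (x \<in> mcomp R x1 \<and> x \<in> mcomp Bl x1)"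
      using XA by blast
    show False using caseS2_half[OF x2 x1 cr[symmetric] cb[symmetric] XA' YA] .
  qed
qed

lemma heavyY_exists: "\<exists>a b. N \<le> card {y\<in>Y. y \<in> mcomp R a \<and> y \<in> mcomp Bl b} + 3 * \<tau>"
proof -
  obtain x1 x2 where x: "x1 \<in> X" "x2 \<in> X" "mcomp R x1 \<noteq> mcomp R x2" "mcomp Bl x1 \<noteq> mcomp Bl x2"
    using cross_exists by blast
  have cc: "N \<le> card {y\<in>Y. y \<in> mcomp R x1 \<and> y \<in> mcomp Bl x2} + card {y\<in>Y. y \<in> mcomp R x2 \<and> y \<in> mcomp Bl x1} + 2 * \<tau>"
    using cells_common[OF x] .
  show ?thesis
  proof (cases "\<tau> < card {y\<in>Y. y \<in> mcomp R x1 \<and> y \<in> mcomp Bl x2}")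
    case h1: True
    show ?thesis
    proof (cases "\<tau> < card {y\<in>Y. y \<in> mcomp R x2 \<and> y \<in> mcomp Bl x1}")
      case True
      then show ?thesis using caseS2[OF x h1] by blast
    next
      case False
      then show ?thesis using cc by (intro exI[of _ x1] exI[of _ x2]) linarith
    qed
  next
    case False
    then show ?thesis using cc by (intro exI[of _ x2] exI[of _ x1]) linarith
  qed
qed

end

context main
begin

lemma gcl_size:
  assumes hX: "\<forall>x\<in>X. x \<in> mcomp R a \<or> x \<in> mcomp Bl b"
    and hY: "\<forall>y\<in>Y. y \<in> mcomp R a \<or> y \<in> mcomp Bl b"
  shows "N \<le> card {x\<in>X. x \<in> mcomp R a \<and> x \<in> mcomp Bl b} + 2 * \<tau>"
proof -
  define C where "C = mcomp R a"
  define D where "D = mcomp Bl b"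
  obtain ya where ya: "ya \<in> Y" "ya \<notin> C" using notspan(2)[of a] by (auto simp: C_def)
  obtain yb where yb: "yb \<in> Y" "yb \<notin> D" using notspan(4)[of b] by (auto simp: D_def)
  have yaD: "ya \<in> D" using hY ya by (auto simp: C_def D_def)
  have ybC: "yb \<in> C" using hY yb by (auto simp: C_def D_def)
  have c1: "card (X - D) \<le> \<tau>"
  proof (rule nn_sub_Y[OF ya(1)])
    show "X - D \<subseteq> X" by blast
    show "\<forall>x\<in>X - D. {x, ya} \<notin> E"
    proof (intro ballI notI)
      fix x assume x: "x \<in> X - D" and e: "{x, ya} \<in> E"
      have xC: "x \<in> C" using hX x by (auto simp: C_def D_def)
      show False
      proof (cases "{x, ya} \<in> R")
        case True
        have "ya \<in> C" using comp_edge[OF True] xC by (simp add: C_def)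
        then show False using ya by blast
      next
        case False
        then have eb: "{x, ya} \<in> Bl" using e edgeRB by blast
        have "x \<in> D" using comp_edge'[OF eb] yaD by (simp add: D_def)
        then show False using x by blast
      qed
    qed
  qed
  have c2: "card (X - C) \<le> \<tau>"
  proof (rule nn_sub_Y[OF yb(1)])
    show "X - C \<subseteq> X" by blast
    show "\<forall>x\<in>X - C. {x, yb} \<notin> E"
    proof (intro ballI notI)
      fix x assume x: "x \<in> X - C" and e: "{x, yb} \<in> E"
      have xD: "x \<in> D" using hX x by (auto simp: C_def D_def)
      show False
      proof (cases "{x, yb} \<in> R")
        case True
        have "x \<in> C" using comp_edge'[OF True] ybC by (simp add: C_def)
        then show False using x by blast
      next
        case False
        then have eb: "{x, yb} \<in> Bl" using e edgeRB by blast
        have "yb \<in> D" using comp_edge[OF eb] xD by (simp add: D_def)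
        then show False using yb by blast
      qed
    qed
  qed
  define A where "A = {x\<in>X. x \<in> C \<and> x \<in> D}"
  have "X \<subseteq> A \<union> ((X - C) \<union> (X - D))" by (auto simp: A_def)
  then have "N \<le> card (A \<union> ((X - C) \<union> (X - D)))" using cX finX by (metis card_mono finite_Un finite_Diff finite_subset Collect_subset A_def)
  also have "\<dots> \<le> card A + card ((X - C) \<union> (X - D))" by (rule card_Un_le)
  also have "card ((X - C) \<union> (X - D)) \<le> card (X - C) + card (X - D)" by (rule card_Un_le)
  finally show ?thesis using c1 c2 unfolding A_def C_def D_def by linarith
qed

lemma main_false: False
proof -
  obtain a b where hb: "N \<le> card {y\<in>Y. y \<in> mcomp R a \<and> y \<in> mcomp Bl b} + 3 * \<tau>"
    using heavyY_exists by blast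
  obtain a' b' where ha: "N \<le> card {x\<in>X. x \<in> mcomp R a' \<and> x \<in> mcomp Bl b'} + 3 * \<tau>"
    using main.heavyY_exists[OF main_swap[OF main_self]] by blast
  define A where "A = {x\<in>X. x \<in> mcomp R a' \<and> x \<in> mcomp Bl b'}"
  define Bc where "Bc = {y\<in>Y. y \<in> mcomp R a \<and> y \<in> mcomp Bl b}"
  have tA: "\<tau> < card A" using ha tau unfolding A_def by linarith
  have tB: "\<tau> < card Bc" using hb tau unfolding Bc_def by linarith
  have hX: "\<forall>x\<in>X. x \<in> mcomp R a \<or> x \<in> mcomp Bl b"
    using heavy tB unfolding Bc_def by blast
  have hY: "\<forall>y\<in>Y. y \<in> mcomp R a' \<or> y \<in> mcomp Bl b'"
    using main.heavy[OF main_swap[OF main_self]] tA unfolding A_def by blast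
  show False
  proof (cases "mcomp R a' = mcomp R a")
    case rr: True
    show False
    proof (cases "mcomp Bl b' = mcomp Bl b")
      case bb: True
      have hY': "\<forall>y\<in>Y. y \<in> mcomp R a \<or> y \<in> mcomp Bl b" using hY rr bb by simp
      have sA: "N \<le> card {x\<in>X. x \<in> mcomp R a \<and> x \<in> mcomp Bl b} + 2 * \<tau>"
        using gcl_size[OF hX hY'] .
      have sB: "N \<le> card {y\<in>Y. y \<in> mcomp R a \<and> y \<in> mcomp Bl b} + 2 * \<tau>"
        using main.gcl_size[OF main_swap[OF main_self] hY' hX] .
      obtain K where K: "finite K" "K \<subseteq> mcomp R a" "card K < m" "\<forall>e\<in>R. e \<subseteq> mcomp R a \<longrightarrow> e \<inter> K \<noteq> {}"
        using col.cover[OF colR, where w = a] by blast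
      obtain L where L: "finite L" "L \<subseteq> mcomp Bl b" "card L < n" "\<forall>e\<in>Bl. e \<subseteq> mcomp Bl b \<longrightarrow> e \<inter> L \<noteq> {}"
        using col.cover[OF colB, where w = b] by blast
      have cKL: "card K + card L \<le> N - 1" using K(3) L(3) mn3 by linarith
      define A0 where "A0 = {x\<in>X. x \<in> mcomp R a \<and> x \<in> mcomp Bl b}"
      define B0 where "B0 = {y\<in>Y. y \<in> mcomp R a \<and> y \<in> mcomp Bl b}"
      have A0s: "A0 \<subseteq> K \<union> L"
        unfolding A0_def using gcl[OF K(1) K(4) L(1) L(4) cKL] sA tau by linarith
      have B0s: "B0 \<subseteq> K \<union> L"
        unfolding B0_def using main.gcl[OF main_swap[OF main_self] K(1) K(4) L(1) L(4) cKL] sB tau by linarith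
      have finA0: "finite A0" using finX by (simp add: A0_def)
      have finB0: "finite B0" using finY by (simp add: B0_def)
      have "card A0 + card B0 = card (A0 \<union> B0)"
        using finA0 finB0 disj by (intro card_Un_disjoint[symmetric]) (auto simp: A0_def B0_def)
      also have "\<dots> \<le> card (K \<union> L)" using A0s B0s K(1) L(1) by (intro card_mono) auto
      also have "\<dots> \<le> card K + card L" by (rule card_Un_le)
      finally have "card A0 + card B0 \<le> N - 1" using cKL by linarith
      then show False using sA sB tau unfolding A0_def B0_def by linarith
    next
      case bb: False
      have D12: "mcomp Bl b' \<inter> mcomp Bl b = {}" using comp_disj[OF bb] .
      have XC: "X - mcomp R a \<subseteq> mcomp Bl b" using hX by blast
      have YC: "Y - mcomp R a \<subseteq> mcomp Bl b'" using hY rr by auto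
      have ne1: "X - mcomp R a \<noteq> {}" using notspan(1) by blast
      have ne2: "Y - mcomp R a \<noteq> {}" using notspan(2) by blast
      obtain a1 b1 jx jy kx ky where "modelc N \<tau> m n a1 b1 jx jy kx ky"
        using col.model[OF colR refl refl refl D12 XC YC ne1 ne2] by blast
      then show False using arithR mn1 mn2 mn3 tau by blast
    qed
  next
    case rr: False
    show False
    proof (cases "mcomp Bl b' = mcomp Bl b")
      case bb: True
      have D12: "mcomp R a' \<inter> mcomp R a = {}" using comp_disj[OF rr] .
      have XC: "X - mcomp Bl b \<subseteq> mcomp R a" using hX by blast
      have YC: "Y - mcomp Bl b \<subseteq> mcomp R a'" using hY bb by auto
      have ne1: "X - mcomp Bl b \<noteq> {}" using notspan(3) by blast
      have ne2: "Y - mcomp Bl b \<noteq> {}" using notspan(4) by blast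
      obtain a1 b1 jx jy kx ky where mc: "a1 - jx = card (X \<inter> mcomp Bl b \<inter> mcomp R a')"
        "b1 - jy = card (Y \<inter> mcomp Bl b \<inter> mcomp R a)" "modelc N \<tau> n m a1 b1 jx jy kx ky"
        using col.model[OF colB refl refl refl D12 XC YC ne1 ne2] by blast
      have eA: "X \<inter> mcomp Bl b \<inter> mcomp R a' = A" unfolding A_def using bb by auto
      have eB: "Y \<inter> mcomp Bl b \<inter> mcomp R a = Bc" unfolding Bc_def by auto
      have "\<tau> < a1 - jx" using mc(1) eA tA by simp
      moreover have "\<tau> < b1 - jy" using mc(2) eB tB by simp
      ultimately show False using arithB[OF mc(3) mn1 mn2 mn3 tau] by blast
    next
      case bb: False
      have "A \<noteq> {}" using tA by (intro notI) simp
      then obtain x where x: "x \<in> A" by blast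
      have xX: "x \<in> X" and xr: "x \<in> mcomp R a'" and xb: "x \<in> mcomp Bl b'" using x by (auto simp: A_def)
      have "x \<in> mcomp R a \<or> x \<in> mcomp Bl b" using hX xX by blast
      then show False
      proof
        assume "x \<in> mcomp R a"
        then have "mcomp R a' = mcomp R a" using comp_eqI[OF xr] by blast
        then show False using rr by blast
      next
        assume "x \<in> mcomp Bl b"
        then have "mcomp Bl b' = mcomp Bl b" using comp_eqI[OF xb] by blast
        then show False using bb by blast
      qed
    qed
  qed
qed

end

theorem theorem1p5:
  fixes V1 V2 :: "'a set" and E R B :: "'a set set" and m n :: nat
  assumes "0 < n" and "n < m"
    and "finite V1" and "finite V2"
    and "card V1 = m + n - 1" and "card V2 = m + n - 1"
    and "bipartite_graph V1 V2 E"
    and "\<forall>v\<in>V1 \<union> V2. 4 * degree E v > 3 * (m + n - 1)"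
    and "R \<union> B = E" and "R \<inter> B = {}"
  shows "has_connected_k_matching R m \<or> has_connected_k_matching B n"
proof (rule ccontr)
  assume neg: "\<not> (has_connected_k_matching R m \<or> has_connected_k_matching B n)"
  note n0 = assms(1) and nm = assms(2) and fin1 = assms(3) and fin2 = assms(4)
    and c1 = assms(5) and c2 = assms(6) and bg = assms(7) and dg = assms(8) and RB1 = assms(9) and RB2 = assms(10)
  define N where "N = m + n - 1"
  define \<tau> where "\<tau> = (N - 1) div 4"
  have disj: "V1 \<inter> V2 = {}" and edges: "\<forall>e\<in>E. \<exists>x\<in>V1. \<exists>y\<in>V2. e = {x, y}"
    using bg unfolding bipartite_graph_def by blast+
  have Npos: "1 \<le> N" using n0 nm by (simp add: N_def)
  have tau: "4 * \<tau> < N" using Npos unfolding \<tau>_def by linarith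
  have nn1: "card {y\<in>V2. {x, y} \<notin> E} \<le> \<tau>" if x: "x \<in> V1" for x
  proof -
    have eq: "{u. {u, x} \<in> E} = {y\<in>V2. {x, y} \<in> E}"
    proof (intro set_eqI iffI)
      fix u assume "u \<in> {u. {u, x} \<in> E}"
      then have e: "{u, x} \<in> E" by simp
      then obtain a b where ab: "a \<in> V1" "b \<in> V2" "{u, x} = {a, b}" using edges by blast
      have "x \<noteq> b" using x ab(2) disj by blast
      then have "u = b" using ab(3) by (metis doubleton_eq_iff)
      then show "u \<in> {y\<in>V2. {x, y} \<in> E}" using ab(2) e by (simp add: insert_commute)
    next
      fix u assume "u \<in> {y\<in>V2. {x, y} \<in> E}"
      then show "u \<in> {u. {u, x} \<in> E}" by (simp add: insert_commute)
    qed
    have d: "degree E x = card {y\<in>V2. {x, y} \<in> E}" using eq by (simp add: degree_def)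
    have 4: "4 * degree E x > 3 * N" using dg x by (simp add: N_def)
    have sub: "{y\<in>V2. {x, y} \<in> E} \<subseteq> V2" by blast
    have cdiff: "card {y\<in>V2. {x, y} \<notin> E} = N - card {y\<in>V2. {x, y} \<in> E}"
    proof -
      have "{y\<in>V2. {x, y} \<notin> E} = V2 - {y\<in>V2. {x, y} \<in> E}" by blast
      then show ?thesis using card_Diff_subset[OF finite_subset[OF sub fin2] sub] c2 by (simp add: N_def)
    qed
    have "card {y\<in>V2. {x, y} \<in> E} \<le> N" using card_mono[OF fin2 sub] c2 by (simp add: N_def)
    then show ?thesis using cdiff d 4 unfolding \<tau>_def by linarith
  qed
  have nn2: "card {x\<in>V1. {x, y} \<notin> E} \<le> \<tau>" if y: "y \<in> V2" for y
  proof -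
    have eq: "{u. {u, y} \<in> E} = {x\<in>V1. {x, y} \<in> E}"
    proof (intro set_eqI iffI)
      fix u assume "u \<in> {u. {u, y} \<in> E}"
      then have e: "{u, y} \<in> E" by simp
      then obtain a b where ab: "a \<in> V1" "b \<in> V2" "{u, y} = {a, b}" using edges by blast
      have "y \<noteq> a" using y ab(1) disj by blast
      then have "u = a" using ab(3) by (metis doubleton_eq_iff)
      then show "u \<in> {x\<in>V1. {x, y} \<in> E}" using ab(1) e by simp
    next
      fix u assume "u \<in> {x\<in>V1. {x, y} \<in> E}"
      then show "u \<in> {u. {u, y} \<in> E}" by simp
    qed
    have d: "degree E y = card {x\<in>V1. {x, y} \<in> E}" using eq by (simp add: degree_def)
    have 4: "4 * degree E y > 3 * N" using dg y by (simp add: N_def)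
    have sub: "{x\<in>V1. {x, y} \<in> E} \<subseteq> V1" by blast
    have cdiff: "card {x\<in>V1. {x, y} \<notin> E} = N - card {x\<in>V1. {x, y} \<in> E}"
    proof -
      have "{x\<in>V1. {x, y} \<notin> E} = V1 - {x\<in>V1. {x, y} \<in> E}" by blast
      then show ?thesis using card_Diff_subset[OF finite_subset[OF sub fin1] sub] c1 by (simp add: N_def)
    qed
    have "card {x\<in>V1. {x, y} \<in> E} \<le> N" using card_mono[OF fin1 sub] c1 by (simp add: N_def)
    then show ?thesis using cdiff d 4 unfolding \<tau>_def by linarith
  qed
  have "bip V1 V2 E N \<tau>"
    unfolding bip_def using fin1 fin2 c1 c2 disj edges nn1 nn2 tau by (simp add: N_def)
  moreover have "main_axioms E N R B m n"
    unfolding main_axioms_def using RB1 RB2 nm n0 neg by (simp add: N_def)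
  ultimately have "main V1 V2 E N \<tau> R B m n" unfolding main_def by blast
  then show False using main.main_false by blast
qed

end
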